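(* Let $\bar t,\bar x$ be sets of $a$ generic complex numbers and $\bar s,\bar y$ sets of $b$ generic complex numbers. Then $$Z_{a,b}(\bar t;\bar x|\bar s;\bar y)=(-1)^{a+b}f(\bar x,\bar t)f(\bar s,\bar t)\sum g(\bar\nu_{\rm I},\bar\nu_{\rm II})\,K_{a+b}(\{\bar\nu_{\rm I},\bar t-c\}|\{\bar x,\bar s\}),$$ where the sum runs over partitions $\{\bar s-c,\bar y\}=\bar\nu\Rightarrow\{\bar\nu_{\rm I},\bar\nu_{\rm II}\}$ with $\#\bar\nu_{\rm I}=\#\bar\nu_{\rm II}=b$.
   Context: Fix $c\neq0$; $g(u,v)=\frac{c}{u-v}$, $f(u,v)=\frac{u-v+c}{u-v}$, $h(u,v)=\frac{u-v+c}{c}$. Shorthand: $g,f,h$ evaluated on sets mean products over all pairs of elements; empty products are $1$; $\bar t-c=\{t_1-c,\dots\}$; $\{\cdot,\cdot\}$ denotes union. $\Delta'_n(\bar u)=\prod_{j<k}g(u_j,u_k)$, $\Delta_n(\bar v)=\prod_{j>k}g(v_j,v_k)$, $K_n(\bar u|\bar v)=\Delta'_n(\bar u)\Delta_n(\bar v)h(\bar u,\bar v)\det_n\big(g(u_j,v_k)/h(u_j,v_k)\big)$ (symmetric in the elements of each argument). The highest coefficient is $Z_{a,b}(\bar t;\bar x|\bar s;\bar y)=h(\bar w,\bar t)\Delta_{a+b}(\bar w)\Delta'_a(\bar t)\Delta'_b(\bar y)\det_{a+b}\mathcal J$ with $\bar w=(x_1,\dots,x_a,s_1,\dots,s_b)$,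 $\mathcal J_{jk}=g(w_j,t_k)/h(w_j,t_k)$ for $k=1,\dots,a$ and $\mathcal J_{j,a+k}=g(w_j,y_k)h(w_j,\bar x)/h(w_j,\bar t)$ for $k=1,\dots,b$. *)

theory Defs
  imports Complex_Main "Jordan_Normal_Form.Determinant"
begin

definition gfun :: "complex \<Rightarrow> complex \<Rightarrow> complex \<Rightarrow> complex" where
  "gfun c u v = c / (u - v)"
definition ffun :: "complex \<Rightarrow> complex \<Rightarrow> complex \<Rightarrow> complex" where
  "ffun c u v = (u - v + c) / (u - v)"
definition hfun :: "complex \<Rightarrow> complex \<Rightarrow> complex \<Rightarrow> complex" where
  "hfun c u v = (u - v + c) / c"

definition pairprod :: "(complex \<Rightarrow> complex \<Rightarrow> complex) \<Rightarrow> complex list \<Rightarrow> complex list \<Rightarrow> complex" where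
  "pairprod F us vs = (\<Prod>i<length us. \<Prod>j<length vs. F (us ! i) (vs ! j))"

definition DeltaP :: "complex \<Rightarrow> complex list \<Rightarrow> complex" where
  "DeltaP c us = (\<Prod>k<length us. \<Prod>j<k. gfun c (us ! j) (us ! k))"
definition Delta :: "complex \<Rightarrow> complex list \<Rightarrow> complex" where
  "Delta c vs = (\<Prod>j<length vs. \<Prod>k<j. gfun c (vs ! j) (vs ! k))"

text \<open>Izergin-Korepin determinant
  K_n(u|v) = Delta'_n(u) Delta_n(v) h(u,v) det_n (g(u_j,v_k)/h(u_j,v_k)),
  written with the factor prod_k h(u_j,v_k) multiplied into row j, so that the
  removable singularities at u_j = v_k - c are resolved (this is the same
  rational function; it agrees with the displayed formula whenever all h(u_j,v_k) are nonzero).\<close>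
definition IKdet :: "complex \<Rightarrow> complex list \<Rightarrow> complex list \<Rightarrow> complex" where
  "IKdet c us vs = DeltaP c us * Delta c vs *
     det (mat (length us) (length us) (\<lambda>(j, k). gfun c (us ! j) (vs ! k) *
        (\<Prod>l\<in>{..<length us} - {k}. hfun c (us ! j) (vs ! l))))"

definition Zhc :: "complex \<Rightarrow> complex list \<Rightarrow> complex list \<Rightarrow> complex list \<Rightarrow> complex list \<Rightarrow> complex" where
  "Zhc c t x s y =
     (let a = length t; b = length s; w = x @ s in
      pairprod (hfun c) w t * Delta c w * DeltaP c t * DeltaP c y *
      det (mat (a + b) (a + b) (\<lambda>(j, k).
        if k < a then gfun c (w ! j) (t ! k) / hfun c (w ! j) (t ! k)
        else gfun c (w ! j) (y ! (k - a)) * pairprod (hfun c) [w ! j] x / pairprod (hfun c) [w ! j] t)))"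

end

theory Submission
  imports Defs "HOL-Computational_Algebra.Polynomial"
begin


lemma det_scale_rc:
  fixes e :: "nat \<Rightarrow> nat \<Rightarrow> 'a::comm_ring_1"
  shows "det (mat n n (\<lambda>(i,j). r i * e i j * s j)) =
    prod r {..<n} * prod s {..<n} * det (mat n n (\<lambda>(i,j). e i j))"
proof -
  have "det (mat n n (\<lambda>(i,j). r i * e i j * s j)) =
     (\<Sum>p\<in>{p. p permutes {0..<n}}. signof p * (\<Prod>i=0..<n. r i * e i (p i) * s (p i)))"
    by (subst det_def'[of _ n]) (auto intro!: sum.cong prod.cong)
  also have "\<dots> = (\<Sum>p\<in>{p. p permutes {0..<n}}. prod r {..<n} * prod s {..<n} * (signof p * (\<Prod>i=0..<n. e i (p i))))"
  proof (rule sum.cong[OF refl])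
    fix p assume "p \<in> {p. p permutes {0..<n}}"
    hence p: "p permutes {0..<n}" by auto
    have "(\<Prod>i=0..<n. s (p i)) = (\<Prod>i=0..<n. s i)"
      using prod.permute[OF p, of s] by (simp add: o_def)
    thus "signof p * (\<Prod>i=0..<n. r i * e i (p i) * s (p i)) =
      prod r {..<n} * prod s {..<n} * (signof p * (\<Prod>i=0..<n. e i (p i)))"
      by (simp add: prod.distrib atLeast0LessThan ac_simps)
  qed
  also have "\<dots> = prod r {..<n} * prod s {..<n} * det (mat n n (\<lambda>(i,j). e i j))"
    by (subst det_def'[of _ n]) (auto simp: sum_distrib_left intro!: sum.cong prod.cong)
  finally show ?thesis .
qed



lemma det_first_col_unit:
  fixes f :: "nat \<times> nat \<Rightarrow> 'a::idom"
  assumes f0: "\<And>i. i < Suc n \<Longrightarrow> f (i, 0) = (if i = 0 then 1 else 0)"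
  shows "det (mat (Suc n) (Suc n) f) = det (mat n n (\<lambda>(i,j). f (Suc i, Suc j)))"
proof -
  let ?A1 = "mat 1 1 (\<lambda>_. 1::'a)"
  let ?A2 = "mat 1 n (\<lambda>(i,j). f (0, Suc j))"
  let ?A3 = "0\<^sub>m n 1 :: 'a mat"
  let ?A4 = "mat n n (\<lambda>(i,j). f (Suc i, Suc j))"
  have eq: "mat (Suc n) (Suc n) f = four_block_mat ?A1 ?A2 ?A3 ?A4"
    by (rule eq_matI) (auto simp: f0 less_Suc_eq_0_disj)
  have "det (four_block_mat ?A1 ?A2 ?A3 ?A4) = det ?A1 * det ?A4"
    by (rule det_four_block_mat_lower_left_zero_col) auto
  also have "det ?A1 = 1" by (simp add: det_single)
  finally show ?thesis using eq by simp
qed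

lemma vandermonde:
  fixes z :: "nat \<Rightarrow> 'a::idom"
  shows "det (mat n n (\<lambda>(k,m). z m ^ k)) = (\<Prod>m<n. \<Prod>j<m. z m - z j)"
proof (induction n arbitrary: z)
  case 0
  then show ?case by simp
next
  case (Suc n)
  let ?V = "mat (Suc n) (Suc n) (\<lambda>(k,m). z m ^ k)"
  let ?L = "mat (Suc n) (Suc n) (\<lambda>(i,j). if i = j then 1 else if i = Suc j then - z 0 else (0::'a))"
  have L: "?L \<in> carrier_mat (Suc n) (Suc n)" by simp
  have V: "?V \<in> carrier_mat (Suc n) (Suc n)" by simp
  have detL: "det ?L = 1"
  proof -
    have "det ?L = prod_list (diag_mat ?L)"
      by (rule det_lower_triangular[of "Suc n"]) auto
    also have "\<dots> = 1"
      by (simp add: prod_list_diag_prod)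
    finally show ?thesis .
  qed
  have LV: "?L * ?V = mat (Suc n) (Suc n) (\<lambda>(k,m). if k = 0 then 1 else z m ^ (k - 1) * (z m - z 0))"
  proof (rule eq_matI)
    fix k m assume k: "k < dim_row (mat (Suc n) (Suc n) (\<lambda>(k,m). if k = 0 then 1 else z m ^ (k - 1) * (z m - z 0)))"
      and m: "m < dim_col (mat (Suc n) (Suc n) (\<lambda>(k,m). if k = 0 then 1 else z m ^ (k - 1) * (z m - z 0)))"
    hence k: "k < Suc n" and m: "m < Suc n" by auto
    have "(?L * ?V) $$ (k, m) = (\<Sum>l<Suc n. ?L $$ (k,l) * z m ^ l)"
      using k m by (simp add: scalar_prod_def row_def col_def atLeast0LessThan)
    also have "\<dots> = (\<Sum>l\<in>{l. l < Suc n \<and> (l = k \<or> Suc l = k)}. ?L $$ (k,l) * z m ^ l)"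
      by (rule sum.mono_neutral_right) (use k in auto)
    also have "\<dots> = (if k = 0 then 1 else z m ^ (k - 1) * (z m - z 0))"
    proof (cases k)
      case 0
      have "{l. l < Suc n \<and> (l = k \<or> Suc l = k)} = {0}" using 0 by auto
      then show ?thesis using 0 k by simp
    next
      case (Suc k')
      have "{l. l < Suc n \<and> (l = k \<or> Suc l = k)} = {k, k'}" using Suc k by auto
      then show ?thesis using Suc k by (simp add: algebra_simps)
    qed
    finally show "(?L * ?V) $$ (k, m) = mat (Suc n) (Suc n) (\<lambda>(k,m). if k = 0 then 1 else z m ^ (k - 1) * (z m - z 0)) $$ (k, m)"
      using k m by simp
  qed auto
  have "det ?V = det (?L * ?V)" using det_mult[OF L V] detL by simp
  also have "\<dots> = det (mat n n (\<lambda>(i,j). z (Suc j) ^ i * (z (Suc j) - z 0)))"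
    unfolding LV by (subst det_first_col_unit) auto
  also have "\<dots> = det (mat n n (\<lambda>(i,j). 1 * z (Suc j) ^ i * (z (Suc j) - z 0)))" by simp
  also have "\<dots> = (\<Prod>j<n. z (Suc j) - z 0) * det (mat n n (\<lambda>(i,j). z (Suc j) ^ i))"
    by (subst det_scale_rc) simp
  also have "\<dots> = (\<Prod>j<n. z (Suc j) - z 0) * (\<Prod>m<n. \<Prod>j<m. z (Suc m) - z (Suc j))"
    using Suc.IH[of "\<lambda>j. z (Suc j)"] by simp
  also have "\<dots> = (\<Prod>m<Suc n. \<Prod>j<m. z m - z j)"
    by (simp only: prod.lessThan_Suc_shift[of "\<lambda>m. \<Prod>j<m. z m - z j"]
        prod.lessThan_Suc_shift[of "\<lambda>j. z (Suc _) - z j"] prod.distrib) simp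
  finally show ?case .
qed



lemma cb_expand:
  fixes F :: "nat \<Rightarrow> nat \<Rightarrow> 'a::comm_ring_1"
  assumes bn: "b \<le> n"
  shows "det (mat n n (\<lambda>(i,j). if i < b then (\<Sum>\<rho><N. \<alpha> i \<rho> * F \<rho> j) else P (i-b) j)) =
    (\<Sum>f\<in>{f. (\<forall>i\<in>{0..<b}. f i \<in> {..<N}) \<and> (\<forall>i. i \<notin> {0..<b} \<longrightarrow> f i = i)}.
       (\<Prod>i<b. \<alpha> i (f i)) * det (mat n n (\<lambda>(i,j). if i < b then F (f i) j else P (i-b) j)))"
proof -
  let ?T = "{0..<b}"
  let ?a = "\<lambda>i \<rho>. \<alpha> i \<rho> \<cdot>\<^sub>v vec n (F \<rho>)"
  let ?c = "\<lambda>i. vec n (P (i-b))"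
  have a: "?a \<in> ?T \<rightarrow> {..<N} \<rightarrow> carrier_vec n" by auto
  have eq1: "mat n n (\<lambda>(i,j). if i < b then (\<Sum>\<rho><N. \<alpha> i \<rho> * F \<rho> j) else P (i-b) j) =
     mat\<^sub>r n n (\<lambda>i. if i \<in> ?T then finsum_vec TYPE('a) n (?a i) {..<N} else ?c i)"
    by (rule eq_matI) (auto simp: index_finsum_vec[OF finite_lessThan] intro!: sum.cong)
  have "det (mat\<^sub>r n n (\<lambda>i. if i \<in> ?T then finsum_vec TYPE('a) n (?a i) {..<N} else ?c i)) =
     (\<Sum>f\<in>{f. (\<forall>i\<in>?T. f i \<in> {..<N}) \<and> (\<forall>i. i \<notin> ?T \<longrightarrow> f i = i)}.
       det (mat\<^sub>r n n (\<lambda>i. if i \<in> ?T then ?a i (f i) else ?c i)))"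
    by (rule det_linear_rows_finsum_lemma) (use bn a in auto)
  also have "\<dots> = (\<Sum>f\<in>{f. (\<forall>i\<in>?T. f i \<in> {..<N}) \<and> (\<forall>i. i \<notin> ?T \<longrightarrow> f i = i)}.
       (\<Prod>i<b. \<alpha> i (f i)) * det (mat n n (\<lambda>(i,j). if i < b then F (f i) j else P (i-b) j)))"
  proof (rule sum.cong[OF refl])
    fix f
    let ?cc = "\<lambda>i. if i < b then \<alpha> i (f i) else 1"
    let ?v = "\<lambda>i. if i < b then vec n (F (f i)) else ?c i"
    have "mat\<^sub>r n n (\<lambda>i. if i \<in> ?T then ?a i (f i) else ?c i) = mat\<^sub>r n n (\<lambda>i. ?cc i \<cdot>\<^sub>v ?v i)"
      by (rule eq_matI) auto
    hence "det (mat\<^sub>r n n (\<lambda>i. if i \<in> ?T then ?a i (f i) else ?c i)) = prod ?cc {0..<n} * det (mat\<^sub>r n n ?v)"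
      by (simp add: det_rows_mul)
    also have "prod ?cc {0..<n} = (\<Prod>i<b. \<alpha> i (f i))"
    proof -
      have "prod ?cc {0..<n} = prod ?cc {0..<b}"
        by (rule prod.mono_neutral_right) (use bn in auto)
      thus ?thesis by (simp add: atLeast0LessThan)
    qed
    also have "mat\<^sub>r n n ?v = mat n n (\<lambda>(i,j). if i < b then F (f i) j else P (i-b) j)"
      by (rule eq_matI) auto
    finally show "det (mat\<^sub>r n n (\<lambda>i. if i \<in> ?T then ?a i (f i) else ?c i)) =
       (\<Prod>i<b. \<alpha> i (f i)) * det (mat n n (\<lambda>(i,j). if i < b then F (f i) j else P (i-b) j))" .
  qed
  finally show ?thesis using eq1 by simp
qed



definition eI :: "nat set \<Rightarrow> nat \<Rightarrow> nat" where
  "eI I m = sorted_list_of_set I ! m"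

lemma eI_bij: assumes "finite I" "card I = b" shows "bij_betw (eI I) {..<b} I"
proof -
  have "bij_betw ((!) (sorted_list_of_set I)) {..<length (sorted_list_of_set I)} (set (sorted_list_of_set I))"
    by (rule bij_betw_nth) auto
  thus ?thesis using assms unfolding eI_def by (simp add: lessThan_def)
qed

lemma cauchy_binet_rows:
  fixes F :: "nat \<Rightarrow> nat \<Rightarrow> 'a::comm_ring_1"
  assumes bn: "b \<le> n"
  shows "det (mat n n (\<lambda>(i,j). if i < b then (\<Sum>\<rho><N. \<alpha> i \<rho> * F \<rho> j) else P (i-b) j)) =
    (\<Sum>I\<in>{I. I \<subseteq> {..<N} \<and> card I = b}. det (mat b b (\<lambda>(k,m). \<alpha> k (eI I m))) *
       det (mat n n (\<lambda>(i,j). if i < b then F (eI I i) j else P (i-b) j)))"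
proof -
  define Fs where "Fs = {f. (\<forall>i\<in>{0..<b}. f i \<in> {..<N}) \<and> (\<forall>i. i \<notin> {0..<b} \<longrightarrow> f i = (i::nat))}"
  define M where "M f = det (mat n n (\<lambda>(i,j). if i < b then F (f i) j else P (i-b) j))" for f
  define g where "g f = (\<Prod>i<b. \<alpha> i (f i)) * M f" for f
  define Inj where "Inj = {f\<in>Fs. inj_on f {..<b}}"
  define Sets where "Sets = {I. I \<subseteq> {..<N} \<and> card I = b}"
  define D where "D = Sigma Sets (\<lambda>_. {\<pi>. \<pi> permutes {..<b}})"
  define h where "h = (\<lambda>(I,\<pi>). \<lambda>i. if i < b then eI I (\<pi> i) else i)"
  have finFs: "finite Fs" unfolding Fs_def by (rule finite_bounded_functions) auto
  have step1: "det (mat n n (\<lambda>(i,j). if i < b then (\<Sum>\<rho><N. \<alpha> i \<rho> * F \<rho> j) else P (i-b) j)) = sum g Fs"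
    unfolding g_def M_def Fs_def by (rule cb_expand[OF bn])
  have zero: "g f = 0" if "f \<in> Fs - Inj" for f
  proof -
    have "\<not> inj_on f {..<b}" using that unfolding Inj_def by blast
    then obtain i j where ij: "i < b" "j < b" "i \<noteq> j" "f i = f j"
      unfolding inj_on_def by blast
    have "M f = 0" unfolding M_def
      proof (rule det_identical_rows[of _ n i j])
      show "row (mat n n (\<lambda>(i,j). if i < b then F (f i) j else P (i-b) j)) i =
        row (mat n n (\<lambda>(i,j). if i < b then F (f i) j else P (i-b) j)) j"
        by (rule eq_vecI) (use ij bn in auto)
    qed (use ij bn in auto)
    thus ?thesis unfolding g_def by simp
  qed
  have "Inj \<subseteq> Fs" unfolding Inj_def by blast
  from sum.subset_diff[OF this finFs, of g]
  have "sum g Fs = sum g Inj + sum g (Fs - Inj)" by (simp add: add.commute)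
  also have "sum g (Fs - Inj) = 0" using zero by simp
  finally have step2: "sum g Fs = sum g Inj" by simp
  have bijh: "bij_betw h D Inj"
  proof (rule bij_betw_imageI)
    show "inj_on h D"
    proof (rule inj_onI)
      fix x y assume x: "x \<in> D" and y: "y \<in> D" and hxy: "h x = h y"
      obtain I \<pi> where xI: "x = (I, \<pi>)" by (cases x)
      obtain I' \<pi>' where yI: "y = (I', \<pi>')" by (cases y)
      have I: "I \<subseteq> {..<N}" "card I = b" and p: "\<pi> permutes {..<b}"
        using x xI unfolding D_def Sets_def by auto
      have I': "I' \<subseteq> {..<N}" "card I' = b" and p': "\<pi>' permutes {..<b}"
        using y yI unfolding D_def Sets_def by auto
      have fI: "finite I" "finite I'" using I I' finite_subset by auto
      have im: "h x ` {..<b} = I" if "x = (I, \<pi>)" "I \<subseteq> {..<N}" "card I = b" "\<pi> permutes {..<b}" for x I \<pi>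
      proof -
        have "h x ` {..<b} = eI I ` \<pi> ` {..<b}" unfolding that h_def by (auto simp: image_iff)
        also have "\<pi> ` {..<b} = {..<b}" by (rule permutes_image[OF that(4)])
        also have "eI I ` {..<b} = I" using eI_bij[of I b] that finite_subset
          by (auto simp: bij_betw_def)
        finally show ?thesis .
      qed
      have "I = I'" using im[OF xI I p] im[OF yI I' p'] hxy by simp
      moreover have "\<pi> = \<pi>'"
      proof
        fix i show "\<pi> i = \<pi>' i"
        proof (cases "i < b")
          case True
          have "eI I (\<pi> i) = eI I (\<pi>' i)" using fun_cong[OF hxy, of i] True \<open>I = I'\<close>
            unfolding xI yI h_def by simp
          moreover have "\<pi> i < b" "\<pi>' i < b" using True p p' permutes_in_image by fastforce+
          ultimately show ?thesis using eI_bij[OF fI(1) I(2)] unfolding bij_betw_def inj_on_def by blast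
        next
          case False
          thus ?thesis using p p' unfolding permutes_def by auto
        qed
      qed
      ultimately show "x = y" using xI yI by simp
    qed
  next
    show "h ` D = Inj"
    proof
      show "h ` D \<subseteq> Inj"
      proof
        fix f assume "f \<in> h ` D"
        then obtain I \<pi> where f: "f = h (I, \<pi>)" and I: "I \<subseteq> {..<N}" "card I = b" and p: "\<pi> permutes {..<b}"
          unfolding D_def Sets_def by auto
        have fI: "finite I" using I finite_subset by auto
        note bj = eI_bij[OF fI I(2)]
        have pb: "\<pi> i < b" if "i < b" for i using p that permutes_in_image by fastforce
        have "f \<in> Fs" unfolding Fs_def f h_def
          using bj pb I by (auto simp: bij_betw_def)
        moreover have "inj_on f {..<b}"
        proof (rule inj_onI)
          fix i j assume "i \<in> {..<b}" "j \<in> {..<b}" "f i = f j"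
          hence "eI I (\<pi> i) = eI I (\<pi> j)" "i < b" "j < b" unfolding f h_def by auto
          hence "\<pi> i = \<pi> j" using pb bj unfolding bij_betw_def inj_on_def by blast
          thus "i = j" using p by (metis permutes_def)
        qed
        ultimately show "f \<in> Inj" unfolding Inj_def by simp
      qed
    next
      show "Inj \<subseteq> h ` D"
      proof
        fix f assume f: "f \<in> Inj"
        define I where "I = f ` {..<b}"
        have inj: "inj_on f {..<b}" using f unfolding Inj_def by simp
        have I: "I \<subseteq> {..<N}" "card I = b" using f inj unfolding Inj_def Fs_def I_def
          by (auto simp: card_image)
        have fI: "finite I" using I finite_subset by auto
        note bj = eI_bij[OF fI I(2)]
        define \<pi> where "\<pi> = (\<lambda>i. if i < b then inv_into {..<b} (eI I) (f i) else i)"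
        have bf: "bij_betw f {..<b} I" using inj unfolding I_def bij_betw_def by simp
        have "bij_betw (inv_into {..<b} (eI I) \<circ> f) {..<b} {..<b}"
          by (rule bij_betw_trans[OF bf bij_betw_inv_into[OF bj]])
        hence "bij_betw \<pi> {..<b} {..<b}"
          by (rule bij_betw_cong[THEN iffD1, rotated]) (simp add: \<pi>_def)
        hence p: "\<pi> permutes {..<b}" by (rule bij_imp_permutes) (simp add: \<pi>_def)
        have "h (I, \<pi>) = f"
        proof
          fix i show "h (I, \<pi>) i = f i"
          proof (cases "i < b")
            case True
            have "f i \<in> eI I ` {..<b}" using bj True unfolding bij_betw_def I_def by auto
            thus ?thesis using True unfolding h_def \<pi>_def by (simp add: f_inv_into_f)
          next
            case False
            thus ?thesis using f unfolding h_def \<pi>_def Inj_def Fs_def by auto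
          qed
        qed
        moreover have "(I, \<pi>) \<in> D" unfolding D_def Sets_def using I p by auto
        ultimately show "f \<in> h ` D" by force
      qed
    qed
  qed
  have "sum g Inj = sum (g \<circ> h) D"
    by (rule sum.reindex_bij_betw[OF bijh, symmetric, unfolded comp_def[symmetric]])
  also have "\<dots> = (\<Sum>I\<in>Sets. \<Sum>\<pi>\<in>{\<pi>. \<pi> permutes {..<b}}. g (h (I, \<pi>)))"
    unfolding D_def by (subst sum.Sigma) (auto simp: Sets_def finite_subset intro: finite_permutations)
  also have "\<dots> = (\<Sum>I\<in>Sets. det (mat b b (\<lambda>(k,m). \<alpha> k (eI I m))) *
       det (mat n n (\<lambda>(i,j). if i < b then F (eI I i) j else P (i-b) j)))"
  proof (rule sum.cong[OF refl])
    fix I assume "I \<in> Sets"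
    let ?MI = "mat n n (\<lambda>(i,j). if i < b then F (eI I i) j else P (i-b) j)"
    have "g (h (I, \<pi>)) = det ?MI * (signof \<pi> * (\<Prod>i=0..<b. \<alpha> i (eI I (\<pi> i))))"
      if p: "\<pi> permutes {..<b}" for \<pi>
    proof -
      have pn: "\<pi> permutes {0..<n}" by (rule permutes_subset[OF p]) (use bn in auto)
      have pb: "\<pi> i < b" if "i < b" for i using p that permutes_in_image by fastforce
      have "mat n n (\<lambda>(i,j). ?MI $$ (\<pi> i, j)) = mat n n (\<lambda>(i,j). if i < b then F (h (I,\<pi>) i) j else P (i-b) j)"
      proof (rule eq_matI)
        fix i j assume i: "i < dim_row (mat n n (\<lambda>(i,j). if i < b then F (h (I,\<pi>) i) j else P (i-b) j))"
          and j: "j < dim_col (mat n n (\<lambda>(i,j). if i < b then F (h (I,\<pi>) i) j else P (i-b) j))"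
        have pin: "\<pi> i < n" using i pn permutes_in_image by fastforce
        have "\<not> i < b \<Longrightarrow> \<pi> i = i" using p unfolding permutes_def by auto
        thus "mat n n (\<lambda>(i,j). ?MI $$ (\<pi> i, j)) $$ (i,j) = mat n n (\<lambda>(i,j). if i < b then F (h (I,\<pi>) i) j else P (i-b) j) $$ (i,j)"
          using i j pin pb unfolding h_def by auto
      qed auto
      hence "M (h (I,\<pi>)) = signof \<pi> * det ?MI"
        unfolding M_def using det_permute_rows[of ?MI n \<pi>, OF _ pn] by auto
      moreover have "(\<Prod>i<b. \<alpha> i (h (I,\<pi>) i)) = (\<Prod>i=0..<b. \<alpha> i (eI I (\<pi> i)))"
        unfolding h_def by (auto simp: atLeast0LessThan intro!: prod.cong)
      ultimately show ?thesis unfolding g_def by (simp add: ac_simps)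
    qed
    hence "(\<Sum>\<pi>\<in>{\<pi>. \<pi> permutes {..<b}}. g (h (I, \<pi>))) =
       det ?MI * (\<Sum>\<pi>\<in>{\<pi>. \<pi> permutes {0..<b}}. signof \<pi> * (\<Prod>i=0..<b. \<alpha> i (eI I (\<pi> i))))"
      by (simp add: sum_distrib_left atLeast0LessThan)
    also have "(\<Sum>\<pi>\<in>{\<pi>. \<pi> permutes {0..<b}}. signof \<pi> * (\<Prod>i=0..<b. \<alpha> i (eI I (\<pi> i)))) =
       det (mat b b (\<lambda>(k,m). \<alpha> k (eI I m)))"
      by (subst det_def'[of _ b]) (auto intro!: sum.cong prod.cong)
    finally show "(\<Sum>\<pi>\<in>{\<pi>. \<pi> permutes {..<b}}. g (h (I, \<pi>))) =
       det (mat b b (\<lambda>(k,m). \<alpha> k (eI I m))) * det ?MI" by simp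
  qed
  finally show ?thesis using step1 step2 unfolding Sets_def by simp
qed



lemma lagrange_set_zero:
  fixes S :: "'a::field set" and Q :: "'a poly"
  assumes fin: "finite S" and deg: "degree Q + 2 \<le> card S"
  shows "(\<Sum>z\<in>S. poly Q z / (\<Prod>v\<in>S-{z}. z - v)) = 0"
proof -
  let ?N = "card S"
  define d where "d u = (\<Prod>v\<in>S-{u}. u - v)" for u
  define B where "B u = (\<Prod>v\<in>S-{u}. [:- v, 1:])" for u
  define P where "P = (\<Sum>u\<in>S. smult (poly Q u / d u) (B u))"
  have degB: "u \<in> S \<Longrightarrow> degree (B u) = ?N - 1" for u
    unfolding B_def using fin by (subst degree_prod_eq_sum_degree) (auto simp: card_Diff_singleton)
  have lcB: "lead_coeff (B u) = 1" for u
    unfolding B_def lead_coeff_prod by simp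
  have cB: "u \<in> S \<Longrightarrow> coeff (B u) (?N - 1) = 1" for u using degB lcB by metis
  have coeffP: "coeff P (?N - 1) = (\<Sum>u\<in>S. poly Q u / d u)"
    unfolding P_def coeff_sum coeff_smult by (rule sum.cong[OF refl]) (simp only: cB mult_1_right)
  have degP: "degree P \<le> ?N - 1"
    unfolding P_def by (rule degree_sum_le[OF fin]) (auto intro: order.trans[OF degree_smult_le] simp: degB)
  have polyB: "u \<in> S \<Longrightarrow> k \<in> S \<Longrightarrow> poly (B u) k = (if u = k then d u else 0)" for u k
    unfolding B_def d_def poly_prod using fin by (auto intro!: prod.cong simp: prod_zero_iff)
  have dnz: "u \<in> S \<Longrightarrow> d u \<noteq> 0" for u
    unfolding d_def using fin by (auto simp: prod_zero_iff)
  have polyP: "k \<in> S \<Longrightarrow> poly P k = poly Q k" for k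
  proof -
    assume k: "k \<in> S"
    have "poly P k = (\<Sum>u\<in>S. poly Q u / d u * poly (B u) k)"
      unfolding P_def poly_sum by simp
    also have "\<dots> = (\<Sum>u\<in>{k}. poly Q u / d u * poly (B u) k)"
      by (rule sum.mono_neutral_right) (use k polyB fin in auto)
    also have "\<dots> = poly Q k" using polyB[OF k k] dnz[OF k] by simp
    finally show ?thesis .
  qed
  have "P = Q"
  proof (rule ccontr)
    assume ne: "P \<noteq> Q"
    hence ne0: "P - Q \<noteq> 0" by simp
    have "S \<subseteq> {x. poly (P - Q) x = 0}" using polyP by auto
    hence "card S \<le> card {x. poly (P - Q) x = 0}"
      by (rule card_mono[OF poly_roots_finite[OF ne0]])
    also have "\<dots> \<le> degree (P - Q)" by (rule card_poly_roots_bound[OF ne0])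
    also have "\<dots> \<le> ?N - 1"
      using degree_diff_le[of P "?N - 1" Q] degP deg by auto
    finally show False using deg by simp
  qed
  hence "coeff P (?N - 1) = 0" using deg by (simp add: coeff_eq_0)
  thus ?thesis using coeffP d_def by simp
qed

lemma det_rowop_block:
  fixes X Y :: "nat \<Rightarrow> nat \<Rightarrow> 'a::comm_ring_1"
  assumes n: "n = b + a"
  shows "det (mat n n (\<lambda>(i,j). if i < b then X i j + (\<Sum>k<a. \<gamma> i k * Y k j) else Y (i-b) j)) =
         det (mat n n (\<lambda>(i,j). if i < b then X i j else Y (i-b) j))"
proof -
  let ?M = "mat n n (\<lambda>(i,j). if i < b then X i j else Y (i-b) j)"
  let ?U = "mat n n (\<lambda>(i,l). if i = l then 1 else if i < b \<and> b \<le> l then \<gamma> i (l - b) else (0::'a))"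
  have U: "?U \<in> carrier_mat n n" and M: "?M \<in> carrier_mat n n" by auto
  have detU: "det ?U = 1"
  proof -
    have "det ?U = prod_list (diag_mat ?U)"
      by (rule det_upper_triangular[of _ n]) (auto simp: upper_triangular_def)
    also have "\<dots> = 1" by (simp add: prod_list_diag_prod)
    finally show ?thesis .
  qed
  have prod: "?U * ?M = mat n n (\<lambda>(i,j). if i < b then X i j + (\<Sum>k<a. \<gamma> i k * Y k j) else Y (i-b) j)"
  proof (rule eq_matI)
    fix i j assume "i < dim_row (mat n n (\<lambda>(i,j). if i < b then X i j + (\<Sum>k<a. \<gamma> i k * Y k j) else Y (i-b) j))"
      "j < dim_col (mat n n (\<lambda>(i,j). if i < b then X i j + (\<Sum>k<a. \<gamma> i k * Y k j) else Y (i-b) j))"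
    hence i: "i < n" and j: "j < n" by auto
    let ?f = "\<lambda>l. ?U $$ (i,l) * ?M $$ (l,j)"
    have "(?U * ?M) $$ (i,j) = (\<Sum>l<n. ?f l)"
      using i j by (simp add: scalar_prod_def atLeast0LessThan)
    also have "\<dots> = (if i < b then X i j + (\<Sum>k<a. \<gamma> i k * Y k j) else Y (i-b) j)"
    proof (cases "i < b")
      case True
      have "(\<Sum>l<n. ?f l) = (\<Sum>l\<in>{i} \<union> {b..<n}. ?f l)"
        by (rule sum.mono_neutral_right) (use i True in auto)
      also have "\<dots> = ?f i + (\<Sum>l\<in>{b..<n}. ?f l)"
        by (subst sum.union_disjoint) (use True in auto)
      also have "(\<Sum>l\<in>{b..<n}. ?f l) = (\<Sum>l\<in>{b..<n}. \<gamma> i (l - b) * Y (l - b) j)"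
        by (rule sum.cong) (use True n j in auto)
      also have "\<dots> = (\<Sum>k<a. \<gamma> i k * Y k j)"
        using sum.atLeastLessThan_shift_0[of "\<lambda>l. \<gamma> i (l - b) * Y (l - b) j" b n] n
        by (simp add: o_def atLeast0LessThan)
      finally show ?thesis using True i j by simp
    next
      case False
      have "(\<Sum>l<n. ?f l) = (\<Sum>l\<in>{i}. ?f l)"
        by (rule sum.mono_neutral_right) (use i False in auto)
      thus ?thesis using False i j by simp
    qed
    finally show "(?U * ?M) $$ (i,j) = mat n n (\<lambda>(i,j). if i < b then X i j + (\<Sum>k<a. \<gamma> i k * Y k j) else Y (i-b) j) $$ (i,j)"
      using i j by simp
  qed auto
  show ?thesis unfolding prod[symmetric] det_mult[OF U M] detU by simp
qed

lemma nths_eq_map_sorted: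
  assumes "I \<subseteq> {..<length xs}"
  shows "nths xs I = map ((!) xs) (sorted_list_of_set I)"
proof -
  have "nths [0..<length xs] I = sorted_list_of_set I"
  proof (rule sorted_distinct_set_unique)
    show "set (nths [0..<length xs] I) = set (sorted_list_of_set I)"
      using assms finite_subset[OF assms] by (auto simp: set_nths) (metis lessThan_iff nth_upt plus_nat.add_0 subsetD)
  qed (auto intro: sorted_nths)
  moreover have "xs = map ((!) xs) [0..<length xs]" by (simp add: map_nth)
  ultimately show ?thesis by (metis nths_map)
qed

lemma nths_nth_eI:
  assumes "I \<subseteq> {..<length xs}" "m < card I"
  shows "nths xs I ! m = xs ! eI I m" and "length (nths xs I) = card I"
  using assms finite_subset[OF assms(1)] by (auto simp: nths_eq_map_sorted eI_def)



lemma prod_nth_set: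
  assumes "distinct vs"
  shows "(\<Prod>j<length vs. f (vs ! j)) = (\<Prod>v\<in>set vs. f v)"
proof -
  have "bij_betw ((!) vs) {..<length vs} (set vs)"
    using bij_betw_nth[OF assms, of "{..<length vs}" "set vs"] by (simp add: lessThan_def)
  thus ?thesis by (simp add: prod.reindex_bij_betw[symmetric])
qed

lemma sum_nth_set:
  assumes "distinct vs"
  shows "(\<Sum>j<length vs. f (vs ! j)) = (\<Sum>v\<in>set vs. f v)"
proof -
  have "bij_betw ((!) vs) {..<length vs} (set vs)"
    using bij_betw_nth[OF assms, of "{..<length vs}" "set vs"] by (simp add: lessThan_def)
  thus ?thesis by (simp add: sum.reindex_bij_betw[symmetric])
qed

lemma prod_nth_set_minus:
  assumes "distinct vs" "m < length vs"
  shows "(\<Prod>j\<in>{..<length vs}-{m}. f (vs ! j)) = (\<Prod>v\<in>set vs - {vs ! m}. f v)"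
proof -
  have inj: "inj_on ((!) vs) {..<length vs}" by (rule inj_on_nth) (use assms in auto)
  have img: "(!) vs ` ({..<length vs}-{m}) = set vs - {vs ! m}"
    using inj assms by (auto simp: inj_on_def in_set_conv_nth)
  have "inj_on ((!) vs) ({..<length vs}-{m})" using inj by (rule inj_on_subset) auto
  thus ?thesis using prod.reindex[of "(!) vs" "{..<length vs}-{m}" f] img by simp
qed

lemma prod_lessThan_add: fixes m n :: nat shows "(\<Prod>i<m+n. f i) = (\<Prod>i<m. f i) * (\<Prod>i<n. f (m+i))"
  by (induction n) (simp_all add: mult.assoc)

lemma sum_lessThan_add: fixes m n :: nat shows "(\<Sum>i<m+n. f i) = (\<Sum>i<m. f i) + (\<Sum>i<n. f (m+i))"
  by (induction n) (simp_all add: add.assoc)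

lemma pairprod_append_left: "pairprod F (us @ us') vs = pairprod F us vs * pairprod F us' vs"
  unfolding pairprod_def by (simp add: prod_lessThan_add nth_append)



locale ZS =
  fixes c :: complex and t x s y :: "complex list" and a b :: nat
  assumes c: "c \<noteq> 0" and lt: "length t = a" and lx: "length x = a" and ls: "length s = b" and ly: "length y = b"
  and generic: "\<And>i j. i < length (t @ x @ s @ y) \<Longrightarrow> j < length (t @ x @ s @ y) \<Longrightarrow> i \<noteq> j \<Longrightarrow>
        (t @ x @ s @ y) ! i - (t @ x @ s @ y) ! j \<notin> {0, c, - c}"
begin

abbreviation "L \<equiv> t @ x @ s @ y"

lemma gen_val:
  assumes "u \<in> set L" "v \<in> set L" "u \<noteq> v"
  shows "u - v \<noteq> 0" "u - v \<noteq> c" "u - v \<noteq> - c"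
proof -
  obtain i j where "i < length L" "j < length L" "L ! i = u" "L ! j = v"
    using assms(1,2) by (metis in_set_conv_nth)
  moreover have "i \<noteq> j" using assms(3) calculation by auto
  ultimately show "u - v \<noteq> 0" "u - v \<noteq> c" "u - v \<noteq> - c" using generic by auto
qed

lemma distL: "distinct L"
  unfolding distinct_conv_nth using generic by fastforce

lemma dist: "distinct t" "distinct x" "distinct s" "distinct y"
  "set t \<inter> set x = {}" "set t \<inter> set s = {}" "set t \<inter> set y = {}"
  "set x \<inter> set s = {}" "set x \<inter> set y = {}" "set s \<inter> set y = {}"
  using distL by auto

lemma inL: "u \<in> set t \<Longrightarrow> u \<in> set L" "u \<in> set x \<Longrightarrow> u \<in> set L"
  "u \<in> set s \<Longrightarrow> u \<in> set L" "u \<in> set y \<Longrightarrow> u \<in> set L" by auto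

lemma nz: assumes "u \<in> set L" "v \<in> set L" "u \<noteq> v"
  shows "u - v \<noteq> 0" "u - v + c \<noteq> 0" "u - v - c \<noteq> 0" "u - c - v \<noteq> 0" "u + c - v \<noteq> 0"
  using gen_val[OF assms] by (auto simp: algebra_simps)

definition "w = x @ s"
definition "Arow k j = gfun c (w ! j) (t ! k) / hfun c (w ! j) (t ! k)"
definition "Bcol k j = gfun c (w ! j) (y ! k) * pairprod (hfun c) [w ! j] x / pairprod (hfun c) [w ! j] t"

lemma lw: "length w = a + b" using lx ls by (simp add: w_def)

lemma Zhc_swap:
  "Zhc c t x s y = pairprod (hfun c) w t * Delta c w * DeltaP c t * DeltaP c y * (-1)^(b*a) *
     det (mat (b+a) (b+a) (\<lambda>(i,j). if i < b then Bcol i j else Arow (i-b) j))"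
proof -
  let ?f = "\<lambda>(j,k). if k < a then gfun c (w ! j) (t ! k) / hfun c (w ! j) (t ! k)
        else gfun c (w ! j) (y ! (k - a)) * pairprod (hfun c) [w ! j] x / pairprod (hfun c) [w ! j] t"
  let ?M = "mat (a+b) (a+b) ?f"
  have "Zhc c t x s y = pairprod (hfun c) w t * Delta c w * DeltaP c t * DeltaP c y * det ?M"
    unfolding Zhc_def Let_def w_def[symmetric] lt ls by simp
  also have "det ?M = det (transpose_mat ?M)" by (rule det_transpose[symmetric]) auto
  also have "\<dots> = (-1)^(b*a) * det (mat (b+a) (b+a) (\<lambda>(i,j). transpose_mat ?M $$ ((if i < b then i + a else i - b), j)))"
    by (rule det_swap_rows) (auto simp: add.commute)
  also have "mat (b+a) (b+a) (\<lambda>(i,j). transpose_mat ?M $$ ((if i < b then i + a else i - b), j)) =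
      mat (b+a) (b+a) (\<lambda>(i,j). if i < b then Bcol i j else Arow (i-b) j)"
    by (rule eq_matI) (auto simp: Arow_def Bcol_def)
  finally show ?thesis by simp
qed

end


context ZS begin

definition "Wm i \<rho> = (y ! \<rho>) ^ i / (\<Prod>v\<in>set y - {y ! \<rho>}. y ! \<rho> - v)"
definition "rr j = pairprod (hfun c) [w ! j] x / pairprod (hfun c) [w ! j] t"
definition "psi j = rr j / (\<Prod>v\<in>set y. w ! j - v)"
definition "Ep i j = (w ! j) ^ i * psi j"

lemma w_in: "j < a + b \<Longrightarrow> w ! j \<in> set x \<or> w ! j \<in> set s"
  using lx ls by (auto simp: w_def nth_append)

lemma w_inL: "j < a + b \<Longrightarrow> w ! j \<in> set L" using w_in by auto

lemma w_notin_y: "j < a + b \<Longrightarrow> w ! j \<notin> set y" using w_in[of j] dist by blast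

lemma lhs_lagrange:
  assumes i: "i < b" and j: "j < a + b"
  shows "(\<Sum>\<rho><b. Wm i \<rho> * Bcol \<rho> j) = c * Ep i j"
proof -
  let ?w = "w ! j"
  let ?S = "insert ?w (set y)"
  have wy: "?w \<notin> set y" by (rule w_notin_y[OF j])
  have cardS: "card ?S = b + 1" using wy dist(4) ly by (simp add: distinct_card)
  have "(\<Sum>z\<in>?S. poly (monom 1 i) z / (\<Prod>v\<in>?S-{z}. z - v)) = 0"
    by (rule lagrange_set_zero) (use cardS i in \<open>auto simp: degree_monom_eq\<close>)
  hence L0: "?w ^ i / (\<Prod>v\<in>set y. ?w - v) + (\<Sum>z\<in>set y. z ^ i / ((z - ?w) * (\<Prod>v\<in>set y - {z}. z - v))) = 0"
  proof -
    have a1: "?S - {?w} = set y" using wy by auto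
    have a2: "z \<in> set y \<Longrightarrow> (\<Prod>v\<in>?S-{z}. z - v) = (z - ?w) * (\<Prod>v\<in>set y - {z}. z - v)" for z
    proof -
      assume z: "z \<in> set y"
      have "?S - {z} = insert ?w (set y - {z})" using z wy by auto
      thus ?thesis using wy by simp
    qed
    assume "(\<Sum>z\<in>?S. poly (monom 1 i) z / (\<Prod>v\<in>?S-{z}. z - v)) = 0"
    thus ?thesis using wy a1 a2 by (simp add: poly_monom)
  qed
  have nzw: "\<And>z. z \<in> set y \<Longrightarrow> ?w - z \<noteq> 0" using wy by auto
  have "(\<Sum>\<rho><b. Wm i \<rho> * Bcol \<rho> j) = (\<Sum>z\<in>set y. z ^ i / (\<Prod>v\<in>set y - {z}. z - v) * (c / (?w - z) * rr j))"
    unfolding ly[symmetric] Wm_def Bcol_def rr_def gfun_def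
    by (subst sum_nth_set[OF dist(4), symmetric]) (simp add: algebra_simps)
  also have "\<dots> = - (c * rr j) * (\<Sum>z\<in>set y. z ^ i / ((z - ?w) * (\<Prod>v\<in>set y - {z}. z - v)))"
    unfolding sum_distrib_left
  proof (rule sum.cong[OF refl])
    fix z assume z: "z \<in> set y"
    have "?w - z \<noteq> 0" using nzw[OF z] .
    moreover have "z - ?w = - (?w - z)" by simp
    ultimately show "z ^ i / (\<Prod>v\<in>set y - {z}. z - v) * (c / (?w - z) * rr j) =
      - (c * rr j) * (z ^ i / ((z - ?w) * (\<Prod>v\<in>set y - {z}. z - v)))"
      by (simp add: field_simps)
  qed
  also have "\<dots> = c * rr j * (?w ^ i / (\<Prod>v\<in>set y. ?w - v))" using L0
    by (simp add: eq_neg_iff_add_eq_0[symmetric] algebra_simps)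
  also have "\<dots> = c * Ep i j" unfolding Ep_def psi_def by simp
  finally show ?thesis .
qed

end


lemma offdiag_prod:
  fixes f :: "nat \<Rightarrow> nat \<Rightarrow> 'a::comm_monoid_mult"
  shows "(\<Prod>m<b. \<Prod>j\<in>{..<b}-{m}. f m j) = (\<Prod>m<b. \<Prod>j<m. f m j * f j m)"
proof (induction b)
  case 0 show ?case by simp
next
  case (Suc b)
  have e1: "m < b \<Longrightarrow> {..<Suc b} - {m} = insert b ({..<b} - {m})" for m by auto
  have e2: "{..<Suc b} - {b} = {..<b}" by auto
  have "(\<Prod>m<Suc b. \<Prod>j\<in>{..<Suc b}-{m}. f m j) =
     (\<Prod>m<b. \<Prod>j\<in>{..<Suc b}-{m}. f m j) * (\<Prod>j<b. f b j)"
    by (simp add: e2)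
  also have "(\<Prod>m<b. \<Prod>j\<in>{..<Suc b}-{m}. f m j) = (\<Prod>m<b. f m b * (\<Prod>j\<in>{..<b}-{m}. f m j))"
    by (rule prod.cong[OF refl]) (simp add: e1)
  also have "\<dots> = (\<Prod>m<b. f m b) * (\<Prod>m<b. \<Prod>j<m. f m j * f j m)"
    by (simp add: prod.distrib Suc.IH)
  also have "(\<Prod>m<Suc b. \<Prod>j<m. f m j * f j m) = (\<Prod>m<b. \<Prod>j<m. f m j * f j m) * (\<Prod>j<b. f b j * f j b)"
    by simp
  ultimately show ?case by (simp add: prod.distrib ac_simps)
qed

lemma vdm_det:
  fixes z :: "complex list"
  assumes d: "distinct z" and l: "length z = b"
  shows "det (mat b b (\<lambda>(i,m). z ! m ^ i * (R m * (\<Prod>v\<in>set z - {z ! m}. c / (z ! m - v))))) =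
    (\<Prod>m<b. R m) * DeltaP c z * (\<Prod>m<b. \<Prod>j<m. c)"
proof -
  let ?P = "\<lambda>m. \<Prod>v\<in>set z - {z ! m}. c / (z ! m - v)"
  have "det (mat b b (\<lambda>(i,m). z ! m ^ i * (R m * ?P m))) = det (mat b b (\<lambda>(i,m). 1 * z ! m ^ i * (R m * ?P m)))"
    by simp
  also have "\<dots> = (\<Prod>m<b. R m * ?P m) * det (mat b b (\<lambda>(i,m). z ! m ^ i))"
    by (subst det_scale_rc) simp
  also have "det (mat b b (\<lambda>(i,m). z ! m ^ i)) = (\<Prod>m<b. \<Prod>j<m. z ! m - z ! j)"
    by (rule vandermonde)
  also have "(\<Prod>m<b. ?P m) = (\<Prod>m<b. \<Prod>j<m. c / (z ! m - z ! j) * (c / (z ! j - z ! m)))"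
  proof -
    have "(\<Prod>m<b. ?P m) = (\<Prod>m<b. \<Prod>j\<in>{..<b}-{m}. c / (z ! m - z ! j))"
      by (rule prod.cong[OF refl]) (use prod_nth_set_minus[OF d, of _ "\<lambda>v. c / (z ! _ - v)"] l in auto)
    thus ?thesis by (simp add: offdiag_prod)
  qed
  ultimately have 1: "det (mat b b (\<lambda>(i,m). z ! m ^ i * (R m * ?P m))) =
     (\<Prod>m<b. R m) * ((\<Prod>m<b. \<Prod>j<m. c / (z ! m - z ! j) * (c / (z ! j - z ! m))) * (\<Prod>m<b. \<Prod>j<m. z ! m - z ! j))"
    by (simp add: prod.distrib ac_simps)
  also have "(\<Prod>m<b. \<Prod>j<m. c / (z ! m - z ! j) * (c / (z ! j - z ! m))) * (\<Prod>m<b. \<Prod>j<m. z ! m - z ! j) =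
     (\<Prod>m<b. \<Prod>j<m. gfun c (z ! j) (z ! m) * c)"
    unfolding prod.distrib[symmetric]
  proof (rule prod.cong[OF refl], rule prod.cong[OF refl])
    fix m j assume "m \<in> {..<b}" "j \<in> {..<m}"
    hence "z ! m \<noteq> z ! j" using d l by (auto simp: nth_eq_iff_index_eq)
    hence "z ! m - z ! j \<noteq> 0" "z ! j - z ! m \<noteq> 0" by auto
    thus "c / (z ! m - z ! j) * (c / (z ! j - z ! m)) * (z ! m - z ! j) = gfun c (z ! j) (z ! m) * c"
    proof -
      have "\<And>p X. p \<noteq> (0::complex) \<Longrightarrow> c / p * X * p = X * c" by simp
      thus ?thesis using \<open>z ! m - z ! j \<noteq> 0\<close> by (simp add: gfun_def)
    qed
  qed
  also have "\<dots> = DeltaP c z * (\<Prod>m<b. \<Prod>j<m. c)"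
    unfolding DeltaP_def l prod.distrib by simp
  finally show ?thesis by (simp add: ac_simps)
qed



lemma prod_if_first: fixes a b :: nat shows "(\<Prod>i<b+a. if i < b then X i else 1) = (\<Prod>i<b. X i)"
  by (subst prod_lessThan_add) auto

lemma prod_if_second: fixes a b :: nat shows "(\<Prod>i<b+a. if i < b then 1 else H (i - b)) = (\<Prod>m<a. H m)"
  by (subst prod_lessThan_add) auto

lemma eI_lessThan: "m < b \<Longrightarrow> eI {..<b} m = m"
  unfolding eI_def lessThan_atLeast0 by simp

lemma sets_full: "{I. I \<subseteq> {..<b} \<and> card I = b} = {{..<b::nat}}"
  using card_subset_eq[of "{..<b}"] by auto

context ZS begin

definition "Wm2 i \<rho> = (y ! \<rho>) ^ i * (1 * (\<Prod>v\<in>set y - {y ! \<rho>}. c / (y ! \<rho> - v)))"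
definition "Cb = (\<Prod>m<b. \<Prod>j<m. c)"
definition "Theta = det (mat (b+a) (b+a) (\<lambda>(i,j). if i < b then Ep i j else Arow (i-b) j))"

lemma Wm2_eq: "\<rho> < b \<Longrightarrow> Wm2 i \<rho> = c ^ (b - 1) * Wm i \<rho>"
proof -
  assume r: "\<rho> < b"
  have "(\<Prod>v\<in>set y - {y ! \<rho>}. c / (y ! \<rho> - v)) = c ^ card (set y - {y ! \<rho>}) / (\<Prod>v\<in>set y - {y ! \<rho>}. y ! \<rho> - v)"
    by (simp add: prod_dividef)
  moreover have "card (set y - {y ! \<rho>}) = b - 1" using r ly dist(4) by (simp add: distinct_card)
  ultimately show ?thesis unfolding Wm2_def Wm_def by simp
qed

lemma lhs_lagrange2: "i < b \<Longrightarrow> j < a + b \<Longrightarrow> (\<Sum>\<rho><b. Wm2 i \<rho> * Bcol \<rho> j) = c ^ b * Ep i j"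
proof -
  assume i: "i < b" and j: "j < a + b"
  have "(\<Sum>\<rho><b. Wm2 i \<rho> * Bcol \<rho> j) = c ^ (b - 1) * (\<Sum>\<rho><b. Wm i \<rho> * Bcol \<rho> j)"
    by (simp add: Wm2_eq sum_distrib_left mult.assoc)
  also have "\<dots> = c ^ (b - 1) * (c * Ep i j)" using lhs_lagrange[OF i j] by simp
  also have "\<dots> = c ^ b * Ep i j" using i by (cases b) auto
  finally show ?thesis .
qed

lemma detW: "det (mat b b (\<lambda>(i,\<rho>). Wm2 i \<rho>)) = DeltaP c y * Cb"
  using vdm_det[OF dist(4) ly, of "\<lambda>_. 1" c] unfolding Wm2_def Cb_def by simp

lemma lhs_main:
  "DeltaP c y * Cb * det (mat (b+a) (b+a) (\<lambda>(i,j). if i < b then Bcol i j else Arow (i-b) j)) = c ^ (b * b) * Theta"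
proof -
  have "det (mat (b+a) (b+a) (\<lambda>(i,j). if i < b then (\<Sum>\<rho><b. Wm2 i \<rho> * Bcol \<rho> j) else Arow (i-b) j)) =
    (\<Sum>I\<in>{I. I \<subseteq> {..<b} \<and> card I = b}. det (mat b b (\<lambda>(k,m). Wm2 k (eI I m))) *
       det (mat (b+a) (b+a) (\<lambda>(i,j). if i < b then Bcol (eI I i) j else Arow (i-b) j)))"
    by (rule cauchy_binet_rows) simp
  also have "\<dots> = det (mat b b (\<lambda>(k,m). Wm2 k m)) *
       det (mat (b+a) (b+a) (\<lambda>(i,j). if i < b then Bcol i j else Arow (i-b) j))"
  proof -
    have "mat b b (\<lambda>(k,m). Wm2 k (eI {..<b} m)) = mat b b (\<lambda>(k,m). Wm2 k m)"
      by (rule eq_matI) (auto simp: eI_lessThan)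
    moreover have "mat (b+a) (b+a) (\<lambda>(i,j). if i < b then Bcol (eI {..<b} i) j else Arow (i-b) j) =
       mat (b+a) (b+a) (\<lambda>(i,j). if i < b then Bcol i j else Arow (i-b) j)"
      by (rule eq_matI) (auto simp: eI_lessThan)
    ultimately show ?thesis unfolding sets_full by simp
  qed
  also have "mat (b+a) (b+a) (\<lambda>(i,j). if i < b then (\<Sum>\<rho><b. Wm2 i \<rho> * Bcol \<rho> j) else Arow (i-b) j) =
      mat (b+a) (b+a) (\<lambda>(i,j). (if i < b then c ^ b else 1) * (if i < b then Ep i j else Arow (i-b) j) * 1)"
    by (rule eq_matI) (auto simp: lhs_lagrange2)
  also have "det \<dots> = c ^ (b * b) * Theta"
    unfolding det_scale_rc Theta_def by (simp add: prod_if_first power_mult)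
  finally show ?thesis unfolding detW by (simp add: ac_simps)
qed

end


context ZS begin

definition "nu = map (\<lambda>z. z - c) s @ y"
definition "tc = map (\<lambda>z. z - c) t"

lemma lnu: "length nu = 2 * b" and ltc: "length tc = a"
  using ls ly lt by (auto simp: nu_def tc_def)

lemma shiftne: "u \<in> set L \<Longrightarrow> v \<in> set L \<Longrightarrow> u - c \<noteq> v"
proof
  assume u: "u \<in> set L" and v: "v \<in> set L" and e: "u - c = v"
  show False
  proof (cases "u = v")
    case True thus False using e c by simp
  next
    case False thus False using gen_val(2)[OF u v] e by (auto simp: algebra_simps)
  qed
qed

lemma shiftne2: "u \<in> set L \<Longrightarrow> v \<in> set L \<Longrightarrow> u \<noteq> v \<Longrightarrow> u - c \<noteq> v - c" by simp

lemma set_nu: "set nu = (\<lambda>z. z - c) ` set s \<union> set y" by (simp add: nu_def)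
lemma set_tc: "set tc = (\<lambda>z. z - c) ` set t" by (simp add: tc_def)

lemma dist_nu: "distinct nu"
proof -
  have "distinct (map (\<lambda>z. z - c) s)" using dist(3) by (simp add: distinct_map inj_on_def)
  moreover have "set (map (\<lambda>z. z - c) s) \<inter> set y = {}"
  proof -
    have "u \<in> set s \<Longrightarrow> u - c \<notin> set y" for u using shiftne[of u] by auto
    thus ?thesis by auto
  qed
  ultimately show ?thesis using dist(4) by (simp add: nu_def)
qed

lemma dist_tc: "distinct tc" using dist(1) by (simp add: tc_def distinct_map inj_on_def)

lemma nu_tc: "set nu \<inter> set tc = {}"
proof -
  have "u \<in> set t \<Longrightarrow> u - c \<notin> set y" for u using shiftne[of u] by auto
  thus ?thesis unfolding set_nu set_tc using dist by auto
qed

lemma w_notin_nu: "j < a + b \<Longrightarrow> w ! j \<notin> set nu"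
proof
  assume j: "j < a + b" and "w ! j \<in> set nu"
  then consider "w ! j \<in> (\<lambda>z. z - c) ` set s" | "w ! j \<in> set y" unfolding set_nu by auto
  thus False
  proof cases
    case 1 then obtain u where "u \<in> set s" "w ! j = u - c" by auto
    thus False using shiftne[of u "w ! j"] w_inL[OF j] by auto
  next
    case 2 thus False using w_notin_y[OF j] by simp
  qed
qed

lemma w_notin_tc: "j < a + b \<Longrightarrow> w ! j \<notin> set tc"
proof
  assume j: "j < a + b" and "w ! j \<in> set tc"
  then obtain u where "u \<in> set t" "w ! j = u - c" unfolding set_tc by auto
  thus False using shiftne[of u "w ! j"] w_inL[OF j] by auto
qed

lemma t_tc: "m < a \<Longrightarrow> t ! m = tc ! m + c" unfolding tc_def using lt by simp

lemma w_ne_t: "j < a + b \<Longrightarrow> m < a \<Longrightarrow> w ! j - t ! m \<noteq> 0"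
proof -
  assume j: "j < a + b" and m: "m < a"
  have "t ! m \<in> set t" using m lt by simp
  have "w ! j \<notin> set t"
  proof
    assume "w ! j \<in> set t"
    thus False using w_in[OF j] dist(5) dist(6) by (auto simp: disjoint_iff)
  qed
  hence "w ! j \<noteq> t ! m" using \<open>t ! m \<in> set t\<close> by metis
  thus ?thesis by simp
qed

lemma w_t_c: "j < a + b \<Longrightarrow> m < a \<Longrightarrow> w ! j - t ! m + c \<noteq> 0"
proof -
  assume j: "j < a + b" and m: "m < a"
  have "t ! m \<in> set L" using m lt by simp
  from nz(2)[OF w_inL[OF j] this] w_ne_t[OF j m] show ?thesis by simp
qed

end


lemma alg1:
  fixes A B c E D P1 P2 d zi R :: complex
  assumes "P1 \<noteq> 0" "P2 \<noteq> 0" "d \<noteq> 0" "D \<noteq> 0" "c \<noteq> 0" "A * B * c = E * D"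
  shows "zi * (A / P1 * (B / P2)) * (c / d * (R / D)) = E * (zi * R / (P1 * d * P2))"
proof -
  have "zi * (A / P1 * (B / P2)) * (c / d * (R / D)) = zi * R * (A * B * c) / (P1 * P2 * d * D)"
    by (simp add: field_simps)
  also have "\<dots> = zi * R * (E * D) / (P1 * P2 * d * D)" using assms(6) by simp
  also have "\<dots> = E * (zi * R / (P1 * d * P2))" using assms by (simp add: field_simps)
  finally show ?thesis .
qed

lemma alg2:
  fixes c Sx Yp Tp R X wi Ca :: complex
  assumes "c \<noteq> 0" "Sx \<noteq> 0" "Yp \<noteq> 0" "Tp \<noteq> 0" "Ca \<noteq> 0" "c * R = X * Sx"
  shows "c ^ (b + 1) * (wi * R / (Sx * Yp * Tp)) = c ^ b * (wi * (X / Ca / (Tp / Ca) / Yp))"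
proof -
  have "c ^ (b + 1) * (wi * R / (Sx * Yp * Tp)) = c ^ b * (wi * (c * R) / (Sx * Yp * Tp))" by simp
  also have "\<dots> = c ^ b * (wi * (X * Sx) / (Sx * Yp * Tp))" using assms(6) by simp
  also have "\<dots> = c ^ b * (wi * (X / Ca / (Tp / Ca) / Yp))" using assms by (simp add: field_simps)
  finally show ?thesis .
qed

lemma alg3:
  fixes c zi p q R D1 D2 :: complex
  assumes "c \<noteq> 0" "p \<noteq> 0" "q \<noteq> 0" "D1 \<noteq> 0" "D2 \<noteq> 0" "0 < b"
  shows "(- (c ^ (b - 1))) * zi * ((- p) * R) / (D1 * D2) * (c / p / (q / c)) = - (c ^ (b + 1)) * (zi * R / (D1 * (- q) * D2))"
proof -
  have cb: "c ^ (b + 1) = c ^ (b - 1) * c * c" using assms(6) by (cases b) auto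
  show ?thesis unfolding cb using assms by (simp add: field_simps)
qed

context ZS begin

definition "alpha i \<rho> = (nu ! \<rho>) ^ i * ((\<Prod>v\<in>set nu - {nu ! \<rho>}. c / (nu ! \<rho> - v)) * (\<Prod>v\<in>set tc. c / (nu ! \<rho> - v)))"
definition "Cr \<rho> k = gfun c (nu ! \<rho>) (w ! k) * (\<Prod>l\<in>{..<a+b}-{k}. hfun c (nu ! \<rho>) (w ! l))"
definition "Gam i m = (- (c ^ (b - 1))) * (tc ! m) ^ i * (\<Prod>l<a+b. t ! m - w ! l) /
   ((\<Prod>v\<in>set nu. tc ! m - v) * (\<Prod>v\<in>set tc - {tc ! m}. tc ! m - v))"

lemma rhs_lagrange:
  assumes i: "i < b" and k: "k < a + b"
  shows "(\<Sum>\<rho><2*b. alpha i \<rho> * Cr \<rho> k) = - (c ^ b) * Ep i k + (\<Sum>m<a. Gam i m * Arow m k)"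
proof -
  let ?w = "w ! k"
  let ?S1 = "set nu" and ?S3 = "set tc"
  let ?S = "?S1 \<union> insert ?w ?S3"
  let ?K = "{..<a+b} - {k}"
  define Q where "Q = monom 1 i * (\<Prod>l\<in>?K. [:c - w ! l, 1:])"
  have polyQ: "poly Q z = z ^ i * (\<Prod>l\<in>?K. z - w ! l + c)" for z
    unfolding Q_def by (simp add: poly_monom poly_prod algebra_simps)
  have degQ: "degree Q \<le> i + (a + b - 1)"
  proof -
    have "degree (\<Prod>l\<in>?K. [:c - w ! l, 1:]) \<le> (\<Sum>l\<in>?K. degree [:c - w ! l, 1:])"
      using degree_prod_sum_le[of ?K "\<lambda>l. [:c - w ! l, 1:]"] by (simp add: o_def)
    also have "\<dots> = a + b - 1" using k by simp
    finally show ?thesis unfolding Q_def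
      using degree_mult_le[of "monom 1 i"] degree_monom_le[of 1 i] by (meson add_le_mono order_trans)
  qed
  have wn: "?w \<notin> ?S1" by (rule w_notin_nu[OF k])
  have wt: "?w \<notin> ?S3" by (rule w_notin_tc[OF k])
  have disj: "?S1 \<inter> ?S3 = {}" by (rule nu_tc)
  have cardS: "card ?S = 2 * b + 1 + a"
    using wn wt disj dist_nu dist_tc lnu ltc by (simp add: card_Un_disjoint distinct_card)
  have lag: "(\<Sum>z\<in>?S. poly Q z / (\<Prod>v\<in>?S-{z}. z - v)) = 0"
    by (rule lagrange_set_zero) (use degQ cardS i in auto)
  define Pn where "Pn z = (\<Prod>v\<in>?S1-{z}. z - v)" for z
  define Pt where "Pt z = (\<Prod>v\<in>?S3. z - v)" for z
  define Pn' where "Pn' z = (\<Prod>v\<in>?S1. z - v)" for z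
  define Pt' where "Pt' z = (\<Prod>v\<in>?S3-{z}. z - v)" for z
  define t1 where "t1 z = poly Q z / (Pn z * (z - ?w) * Pt z)" for z
  define t2 where "t2 = poly Q ?w / (Pn' ?w * Pt ?w)"
  define t3 where "t3 z = poly Q z / (Pn' z * (z - ?w) * Pt' z)" for z
  have split: "(\<Sum>z\<in>?S1. t1 z) + t2 + (\<Sum>z\<in>?S3. t3 z) = 0"
  proof -
    have p1: "z \<in> ?S1 \<Longrightarrow> (\<Prod>v\<in>?S-{z}. z - v) = Pn z * (z - ?w) * Pt z" for z
    proof -
      assume z: "z \<in> ?S1"
      have e: "?S - {z} = (?S1 - {z}) \<union> insert ?w ?S3" using z disj wn by auto
      show ?thesis unfolding e Pn_def Pt_def
        by (subst prod.union_disjoint) (use z disj wn wt in \<open>auto simp: ac_simps\<close>)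
    qed
    have p2: "(\<Prod>v\<in>?S-{?w}. ?w - v) = Pn' ?w * Pt ?w"
    proof -
      have "?S - {?w} = ?S1 \<union> ?S3" using wn wt by auto
      thus ?thesis unfolding Pn'_def Pt_def using disj by (simp add: prod.union_disjoint)
    qed
    have p3: "z \<in> ?S3 \<Longrightarrow> (\<Prod>v\<in>?S-{z}. z - v) = Pn' z * (z - ?w) * Pt' z" for z
    proof -
      assume z: "z \<in> ?S3"
      have e: "?S - {z} = ?S1 \<union> insert ?w (?S3 - {z})" using z disj wt by auto
      show ?thesis unfolding e Pn'_def Pt'_def
        by (subst prod.union_disjoint) (use z disj wn wt in \<open>auto simp: ac_simps\<close>)
    qed
    have "(\<Sum>z\<in>?S. poly Q z / (\<Prod>v\<in>?S-{z}. z - v)) =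
       (\<Sum>z\<in>?S1. poly Q z / (\<Prod>v\<in>?S-{z}. z - v)) + (poly Q ?w / (\<Prod>v\<in>?S-{?w}. ?w - v) +
       (\<Sum>z\<in>?S3. poly Q z / (\<Prod>v\<in>?S-{z}. z - v)))"
      using disj wn wt by (simp add: sum.union_disjoint)
    also have "\<dots> = (\<Sum>z\<in>?S1. t1 z) + t2 + (\<Sum>z\<in>?S3. t3 z)"
    proof -
      have s1: "(\<Sum>z\<in>?S1. poly Q z / (\<Prod>v\<in>?S-{z}. z - v)) = (\<Sum>z\<in>?S1. t1 z)"
        by (rule sum.cong[OF refl]) (simp only: p1 t1_def)
      have s3: "(\<Sum>z\<in>?S3. poly Q z / (\<Prod>v\<in>?S-{z}. z - v)) = (\<Sum>z\<in>?S3. t3 z)"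
        by (rule sum.cong[OF refl]) (simp only: p3 t3_def)
      show ?thesis by (simp only: s1 s3 p2 t2_def add.assoc)
    qed
    finally show ?thesis using lag by simp
  qed
  have b0: "0 < b" using i by simp
  have S1fin: "finite ?S1" and S3fin: "finite ?S3" by auto
  have A1: "(\<Sum>\<rho><2*b. alpha i \<rho> * Cr \<rho> k) = c ^ (b + 1) * (\<Sum>z\<in>?S1. t1 z)"
  proof -
    define f where "f z = z ^ i * ((\<Prod>v\<in>?S1-{z}. c / (z - v)) * (\<Prod>v\<in>?S3. c / (z - v))) *
       (gfun c z ?w * (\<Prod>l\<in>?K. hfun c z (w ! l)))" for z
    have "(\<Sum>\<rho><2*b. alpha i \<rho> * Cr \<rho> k) = (\<Sum>\<rho><length nu. f (nu ! \<rho>))"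
      unfolding lnu f_def alpha_def Cr_def by simp
    also have "\<dots> = (\<Sum>z\<in>?S1. f z)" by (rule sum_nth_set[OF dist_nu])
    also have "\<dots> = (\<Sum>z\<in>?S1. c ^ (b + 1) * t1 z)"
    proof (rule sum.cong[OF refl])
      fix z assume z: "z \<in> ?S1"
      have zt: "z \<notin> ?S3" using z disj by auto
      have Pnz: "Pn z \<noteq> 0" unfolding Pn_def by (auto simp: prod_zero_iff)
      have Ptz: "Pt z \<noteq> 0" unfolding Pt_def using zt by (auto simp: prod_zero_iff)
      have dz: "z - ?w \<noteq> 0" using z wn by auto
      have c1: "card (?S1 - {z}) = 2 * b - 1" using z dist_nu lnu by (simp add: distinct_card)
      have c3: "card ?S3 = a" using dist_tc ltc by (simp add: distinct_card)
      have cK: "card ?K = a + b - 1" using k by simp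
      have e1: "(\<Prod>v\<in>?S1-{z}. c / (z - v)) = c ^ (2 * b - 1) / Pn z"
        unfolding Pn_def prod_dividef c1[symmetric] by simp
      have e2: "(\<Prod>v\<in>?S3. c / (z - v)) = c ^ a / Pt z"
        unfolding Pt_def prod_dividef c3[symmetric] by simp
      have e3: "(\<Prod>l\<in>?K. hfun c z (w ! l)) = (\<Prod>l\<in>?K. z - w ! l + c) / c ^ (a + b - 1)"
        unfolding hfun_def prod_dividef cK[symmetric] by simp
      have pw: "c ^ (2 * b - 1) * c ^ a * c = c ^ (b + 1) * c ^ (a + b - 1)"
      proof -
        have "c ^ (2 * b - 1) * c ^ a * c = c ^ (2 * b - 1 + a + 1)" by (simp add: power_add)
        also have "2 * b - 1 + a + 1 = (b + 1) + (a + b - 1)" using b0 by simp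
        also have "c ^ ((b + 1) + (a + b - 1)) = c ^ (b + 1) * c ^ (a + b - 1)" by (simp add: power_add)
        finally show ?thesis .
      qed
      show "f z = c ^ (b + 1) * t1 z"
        unfolding f_def e1 e2 e3 t1_def polyQ gfun_def
        by (rule alg1[OF Pnz Ptz dz _ c pw]) (use c in simp)
    qed
    also have "\<dots> = c ^ (b + 1) * (\<Sum>z\<in>?S1. t1 z)" by (simp add: sum_distrib_left)
    finally show ?thesis .
  qed
  have A2: "c ^ (b + 1) * t2 = c ^ b * Ep i k"
  proof -
    define X where "X = (\<Prod>l<a. ?w - x ! l + c)"
    define Sx where "Sx = (\<Prod>l<b. ?w - s ! l + c)"
    define Yp where "Yp = (\<Prod>v\<in>set y. ?w - v)"
    define Tp where "Tp = (\<Prod>m<a. ?w - t ! m + c)"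
    define R where "R = (\<Prod>l\<in>?K. ?w - w ! l + c)"
    have hR: "c * R = X * Sx"
    proof -
      have "(\<Prod>l<a+b. ?w - w ! l + c) = (?w - w ! k + c) * R"
        unfolding R_def using k by (subst prod.remove[of _ k]) auto
      moreover have "(\<Prod>l<a+b. ?w - w ! l + c) = X * Sx"
        unfolding X_def Sx_def prod_lessThan_add w_def using lx by (simp add: nth_append)
      ultimately show ?thesis by simp
    qed
    have hPn: "Pn' ?w = Sx * Yp"
    proof -
      have "Pn' ?w = (\<Prod>\<rho><length nu. ?w - nu ! \<rho>)"
        unfolding Pn'_def by (rule prod_nth_set[OF dist_nu, symmetric])
      also have "\<dots> = (\<Prod>\<rho><b. ?w - (s ! \<rho> - c)) * (\<Prod>\<rho><b. ?w - y ! \<rho>)"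
        by (simp only: lnu mult_2 prod_lessThan_add) (simp add: nu_def nth_append ls)
      also have "(\<Prod>\<rho><b. ?w - y ! \<rho>) = Yp"
        unfolding Yp_def ly[symmetric] by (rule prod_nth_set[OF dist(4)])
      finally show ?thesis unfolding Sx_def by (simp add: algebra_simps)
    qed
    have hPt: "Pt ?w = Tp"
    proof -
      have "Pt ?w = (\<Prod>m<length tc. ?w - tc ! m)"
        unfolding Pt_def by (rule prod_nth_set[OF dist_tc, symmetric])
      thus ?thesis unfolding Tp_def ltc using t_tc by (simp add: algebra_simps)
    qed
    have hx: "pairprod (hfun c) [?w] x = X / c ^ a"
      unfolding pairprod_def X_def hfun_def lx by (simp add: prod_dividef)
    have ht: "pairprod (hfun c) [?w] t = Tp / c ^ a"
      unfolding pairprod_def Tp_def hfun_def lt by (simp add: prod_dividef)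
    have nzS0: "?w - s ! l + c \<noteq> 0" if l: "l \<in> {..<b}" for l
    proof
      assume e: "?w - s ! l + c = 0"
      have sl: "s ! l \<in> set L" using l ls by auto
      show False
      proof (cases "?w = s ! l")
        case True thus False using e c by simp
      next
        case False thus False using gen_val(3)[OF w_inL[OF k] sl] e by (simp add: algebra_simps)
      qed
    qed
    have nzS: "Sx \<noteq> 0" unfolding Sx_def using nzS0 by (simp add: prod_zero_iff)
    have nzY: "Yp \<noteq> 0" unfolding Yp_def using w_notin_y[OF k] by (auto simp: prod_zero_iff)
    have nzT: "Tp \<noteq> 0" unfolding Tp_def using w_t_c[OF k] by (auto simp: prod_zero_iff)
    show ?thesis
      unfolding t2_def polyQ hPn hPt Ep_def psi_def rr_def hx ht R_def[symmetric] Yp_def[symmetric]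
      by (rule alg2[OF c nzS nzY nzT _ hR]) (use c in simp)
  qed
  have A3: "(\<Sum>m<a. Gam i m * Arow m k) = - (c ^ (b + 1)) * (\<Sum>z\<in>?S3. t3 z)"
  proof -
    have "(\<Sum>m<a. Gam i m * Arow m k) = (\<Sum>m<length tc. - (c ^ (b + 1)) * t3 (tc ! m))"
      unfolding ltc
    proof (rule sum.cong[OF refl])
      fix m assume "m \<in> {..<a}"
      hence m: "m < a" by simp
      let ?z = "tc ! m"
      have zS3: "?z \<in> ?S3" using m ltc by auto
      have zn: "?z \<notin> ?S1" using zS3 disj by auto
      have tm: "t ! m = ?z + c" by (rule t_tc[OF m])
      define R where "R = (\<Prod>l\<in>?K. t ! m - w ! l)"
      have hR: "(\<Prod>l<a+b. t ! m - w ! l) = (- (?w - t ! m)) * R"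
        unfolding R_def using k by (subst prod.remove[of _ k]) auto
      have hQ: "poly Q ?z = ?z ^ i * R"
        unfolding polyQ R_def tm by (simp add: algebra_simps)
      have hz: "?z - ?w = - (?w - t ! m + c)" unfolding tm by simp
      have D1: "Pn' ?z \<noteq> 0" unfolding Pn'_def using zn by (auto simp: prod_zero_iff)
      have D2: "Pt' ?z \<noteq> 0" unfolding Pt'_def by (auto simp: prod_zero_iff)
      have p: "?w - t ! m \<noteq> 0" by (rule w_ne_t[OF k m])
      have q: "?w - t ! m + c \<noteq> 0" by (rule w_t_c[OF k m])
      show "Gam i m * Arow m k = - (c ^ (b + 1)) * t3 (tc ! m)"
        unfolding Gam_def Arow_def t3_def hQ hz hR Pn'_def[symmetric] Pt'_def[symmetric] gfun_def hfun_def
        by (rule alg3[OF c p q D1 D2 b0])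
    qed
    also have "\<dots> = (\<Sum>z\<in>?S3. - (c ^ (b + 1)) * t3 z)" by (rule sum_nth_set[OF dist_tc])
    finally show ?thesis by (simp add: sum_distrib_left)
  qed
  have "(\<Sum>z\<in>?S1. t1 z) = - t2 - (\<Sum>z\<in>?S3. t3 z)" using split by (simp add: algebra_simps eq_neg_iff_add_eq_0)
  hence "(\<Sum>\<rho><2*b. alpha i \<rho> * Cr \<rho> k) = c ^ (b + 1) * (- t2 - (\<Sum>z\<in>?S3. t3 z))"
    unfolding A1 by simp
  also have "\<dots> = - (c ^ (b + 1) * t2) - c ^ (b + 1) * (\<Sum>z\<in>?S3. t3 z)"
    by (simp add: right_diff_distrib)
  also have "\<dots> = - (c ^ b) * Ep i k + (\<Sum>m<a. Gam i m * Arow m k)"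
    unfolding A2 A3 by simp
  finally show ?thesis .
qed

end


lemma DeltaP_append: "DeltaP c (us @ vs) = DeltaP c us * DeltaP c vs * pairprod (gfun c) us vs"
proof -
  let ?g = "gfun c"
  have "DeltaP c (us @ vs) = (\<Prod>k<length us. \<Prod>j<k. ?g (us ! j) (us ! k)) *
      (\<Prod>k<length vs. \<Prod>j<length us + k. ?g ((us @ vs) ! j) (vs ! k))"
    unfolding DeltaP_def length_append prod_lessThan_add by (simp add: nth_append)
  also have "(\<Prod>k<length vs. \<Prod>j<length us + k. ?g ((us @ vs) ! j) (vs ! k)) =
     (\<Prod>k<length vs. (\<Prod>j<length us. ?g (us ! j) (vs ! k)) * (\<Prod>j<k. ?g (vs ! j) (vs ! k)))"
    unfolding prod_lessThan_add by (simp add: nth_append)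
  also have "\<dots> = (\<Prod>k<length vs. \<Prod>j<length us. ?g (us ! j) (vs ! k)) * DeltaP c vs"
    unfolding DeltaP_def prod.distrib ..
  also have "(\<Prod>k<length vs. \<Prod>j<length us. ?g (us ! j) (vs ! k)) = pairprod ?g us vs"
    unfolding pairprod_def by (rule prod.swap)
  finally show ?thesis unfolding DeltaP_def by (simp add: ac_simps)
qed

lemma DeltaP_shift: "DeltaP c (map (\<lambda>z. z - c) t) = DeltaP c t"
  unfolding DeltaP_def gfun_def by simp

context ZS begin

lemma rhs_detsum:
  "(\<Sum>I\<in>{I. I \<subseteq> {..<2*b} \<and> card I = b}. det (mat b b (\<lambda>(k,m). alpha k (eI I m))) *
       det (mat (b+a) (b+a) (\<lambda>(i,j). if i < b then Cr (eI I i) j else Arow (i-b) j))) = (- (c ^ b)) ^ b * Theta"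
proof -
  have "(\<Sum>I\<in>{I. I \<subseteq> {..<2*b} \<and> card I = b}. det (mat b b (\<lambda>(k,m). alpha k (eI I m))) *
       det (mat (b+a) (b+a) (\<lambda>(i,j). if i < b then Cr (eI I i) j else Arow (i-b) j))) =
     det (mat (b+a) (b+a) (\<lambda>(i,j). if i < b then (\<Sum>\<rho><2*b. alpha i \<rho> * Cr \<rho> j) else Arow (i-b) j))"
    by (rule cauchy_binet_rows[symmetric]) simp
  also have "mat (b+a) (b+a) (\<lambda>(i,j). if i < b then (\<Sum>\<rho><2*b. alpha i \<rho> * Cr \<rho> j) else Arow (i-b) j) =
     mat (b+a) (b+a) (\<lambda>(i,j). if i < b then - (c ^ b) * Ep i j + (\<Sum>m<a. Gam i m * Arow m j) else Arow (i-b) j)"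
    by (rule eq_matI) (auto simp: rhs_lagrange)
  also have "det \<dots> = det (mat (b+a) (b+a) (\<lambda>(i,j). if i < b then - (c ^ b) * Ep i j else Arow (i-b) j))"
    by (rule det_rowop_block) simp
  also have "mat (b+a) (b+a) (\<lambda>(i,j). if i < b then - (c ^ b) * Ep i j else Arow (i-b) j) =
      mat (b+a) (b+a) (\<lambda>(i,j). (if i < b then - (c ^ b) else 1) * (if i < b then Ep i j else Arow (i-b) j) * 1)"
    by (rule eq_matI) auto
  also have "det \<dots> = (- (c ^ b)) ^ b * Theta"
    unfolding det_scale_rc Theta_def by (simp add: prod_if_first)
  finally show ?thesis .
qed

end


lemma alg4:
  fixes c p q :: complex
  assumes "p \<noteq> 0" "q \<noteq> 0" "c \<noteq> 0"
  shows "c / (- q) = (- p) / c * (c / p / (q / c))"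
  using assms by (simp add: field_simps)

context ZS begin

lemma g_tc_eq: "m < a \<Longrightarrow> j < a + b \<Longrightarrow> gfun c (tc ! m) (w ! j) = hfun c (tc ! m) (w ! j) * Arow m j"
proof -
  assume m: "m < a" and j: "j < a + b"
  have tcm: "tc ! m = t ! m - c" using m lt by (simp add: tc_def)
  have p: "w ! j - t ! m \<noteq> 0" by (rule w_ne_t[OF j m])
  have q: "w ! j - t ! m + c \<noteq> 0" by (rule w_t_c[OF j m])
  have e1: "t ! m - c - w ! j = - (w ! j - t ! m + c)" by simp
  have e2: "- (w ! j - t ! m + c) + c = - (w ! j - t ! m)" by simp
  show ?thesis unfolding tcm gfun_def hfun_def Arow_def e1 e2 by (rule alg4[OF p q c])
qed

lemma rhs_term:
  assumes I: "I \<subseteq> {..<2*b}" "card I = b"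
  shows "pairprod (gfun c) (nths nu I) (nths nu ({..<2*b} - I)) * IKdet c (nths nu I @ tc) w * Cb =
    DeltaP c t * Delta c w * pairprod (hfun c) tc w *
    (det (mat b b (\<lambda>(k,m). alpha k (eI I m))) *
     det (mat (b+a) (b+a) (\<lambda>(i,j). if i < b then Cr (eI I i) j else Arow (i-b) j)))"
proof -
  let ?zI = "nths nu I" and ?zII = "nths nu ({..<2*b} - I)"
  let ?M = "mat (b+a) (b+a) (\<lambda>(i,j). if i < b then Cr (eI I i) j else Arow (i-b) j)"
  have Il: "I \<subseteq> {..<length nu}" using I lnu by simp
  have lzI: "length ?zI = b"
  proof -
    have "{i. i < length nu \<and> i \<in> I} = I" using Il by auto
    thus ?thesis using I by (simp add: length_nths)
  qed
  have zIn: "m < b \<Longrightarrow> ?zI ! m = nu ! eI I m" for m using nths_nth_eI(1)[OF Il] I by simp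
  have dI: "distinct ?zI" and dII: "distinct ?zII" using dist_nu by auto
  have setI: "set ?zI = {nu ! i | i. i < 2*b \<and> i \<in> I}" by (simp add: set_nths lnu)
  have setII: "set ?zII = {nu ! i | i. i < 2*b \<and> i \<notin> I}" by (simp add: set_nths lnu)
  have disjI: "set ?zI \<inter> set ?zII = {}"
    unfolding setI setII using dist_nu lnu by (auto simp: nth_eq_iff_index_eq)
  have unI: "set ?zI \<union> set ?zII = set nu"
  proof
    show "set ?zI \<union> set ?zII \<subseteq> set nu" by (auto dest: in_set_nthsD)
    show "set nu \<subseteq> set ?zI \<union> set ?zII"
    proof
      fix v assume "v \<in> set nu"
      then obtain i where i: "i < 2 * b" "nu ! i = v" using lnu by (metis in_set_conv_nth)
      thus "v \<in> set ?zI \<union> set ?zII" unfolding setI setII by (cases "i \<in> I") auto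
    qed
  qed
  have lus: "length (?zI @ tc) = b + a" using lzI ltc by simp
  have stepA: "IKdet c (?zI @ tc) w = DeltaP c (?zI @ tc) * Delta c w * (pairprod (hfun c) tc w * det ?M)"
  proof -
    define H where "H m = (\<Prod>l<a+b. hfun c (tc ! m) (w ! l))" for m
    have "mat (b+a) (b+a) (\<lambda>(j,k). gfun c ((?zI @ tc) ! j) (w ! k) * (\<Prod>l\<in>{..<b+a}-{k}. hfun c ((?zI @ tc) ! j) (w ! l))) =
      mat (b+a) (b+a) (\<lambda>(i,j). (if i < b then 1 else H (i - b)) * (if i < b then Cr (eI I i) j else Arow (i-b) j) * 1)"
    proof (rule eq_matI)
      fix i j assume "i < dim_row (mat (b+a) (b+a) (\<lambda>(i,j). (if i < b then 1 else H (i - b)) * (if i < b then Cr (eI I i) j else Arow (i-b) j) * 1))"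
        "j < dim_col (mat (b+a) (b+a) (\<lambda>(i,j). (if i < b then 1 else H (i - b)) * (if i < b then Cr (eI I i) j else Arow (i-b) j) * 1))"
      hence i: "i < b + a" and j: "j < b + a" by auto
      show "mat (b+a) (b+a) (\<lambda>(j,k). gfun c ((?zI @ tc) ! j) (w ! k) * (\<Prod>l\<in>{..<b+a}-{k}. hfun c ((?zI @ tc) ! j) (w ! l))) $$ (i,j) =
        mat (b+a) (b+a) (\<lambda>(i,j). (if i < b then 1 else H (i - b)) * (if i < b then Cr (eI I i) j else Arow (i-b) j) * 1) $$ (i,j)"
      proof (cases "i < b")
        case True
        thus ?thesis using i j lzI zIn[OF True] by (simp add: nth_append Cr_def add.commute)
      next
        case False
        let ?m = "i - b"
        have m: "?m < a" using i False by simp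
        have j': "j < a + b" using j by simp
        have "H ?m = hfun c (tc ! ?m) (w ! j) * (\<Prod>l\<in>{..<a+b}-{j}. hfun c (tc ! ?m) (w ! l))"
          unfolding H_def using j' by (subst prod.remove[of _ j]) auto
        hence "gfun c (tc ! ?m) (w ! j) * (\<Prod>l\<in>{..<a+b}-{j}. hfun c (tc ! ?m) (w ! l)) = H ?m * Arow ?m j"
          using g_tc_eq[OF m j'] by simp
        thus ?thesis using i j lzI False by (simp add: nth_append add.commute)
      qed
    qed auto
    note Meq = this
    have "IKdet c (?zI @ tc) w = DeltaP c (?zI @ tc) * Delta c w *
        ((\<Prod>i<b+a. if i < b then 1 else H (i - b)) * (\<Prod>i<b+a. 1) * det ?M)"
      unfolding IKdet_def lus by (simp only: Meq det_scale_rc)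
    also have "(\<Prod>i<b+a. if i < b then 1 else H (i - b)) = pairprod (hfun c) tc w"
      by (simp only: prod_if_second) (simp add: H_def pairprod_def ltc lw)
    finally show ?thesis by simp
  qed
  have stepB: "DeltaP c (?zI @ tc) = DeltaP c ?zI * DeltaP c t * pairprod (gfun c) ?zI tc"
    unfolding DeltaP_append by (simp add: tc_def DeltaP_shift)
  have stepC: "det (mat b b (\<lambda>(k,m). alpha k (eI I m))) =
     pairprod (gfun c) ?zI ?zII * pairprod (gfun c) ?zI tc * DeltaP c ?zI * Cb"
  proof -
    define R where "R m = (\<Prod>v\<in>set ?zII. c / (?zI ! m - v)) * (\<Prod>v\<in>set tc. c / (?zI ! m - v))" for m
    have "mat b b (\<lambda>(k,m). alpha k (eI I m)) =
      mat b b (\<lambda>(i,m). ?zI ! m ^ i * (R m * (\<Prod>v\<in>set ?zI - {?zI ! m}. c / (?zI ! m - v))))"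
    proof (rule eq_matI)
      fix i m assume "i < dim_row (mat b b (\<lambda>(i,m). ?zI ! m ^ i * (R m * (\<Prod>v\<in>set ?zI - {?zI ! m}. c / (?zI ! m - v)))))"
        "m < dim_col (mat b b (\<lambda>(i,m). ?zI ! m ^ i * (R m * (\<Prod>v\<in>set ?zI - {?zI ! m}. c / (?zI ! m - v)))))"
      hence i: "i < b" and m: "m < b" by auto
      let ?z = "?zI ! m"
      have zin: "?z \<in> set ?zI" using m lzI by simp
      have e: "set nu - {?z} = (set ?zI - {?z}) \<union> set ?zII" using unI disjI zin by blast
      have "(\<Prod>v\<in>set nu - {?z}. c / (?z - v)) = (\<Prod>v\<in>set ?zI - {?z}. c / (?z - v)) * (\<Prod>v\<in>set ?zII. c / (?z - v))"
        unfolding e by (rule prod.union_disjoint) (use disjI in auto)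
      thus "mat b b (\<lambda>(k,m). alpha k (eI I m)) $$ (i,m) =
        mat b b (\<lambda>(i,m). ?zI ! m ^ i * (R m * (\<Prod>v\<in>set ?zI - {?zI ! m}. c / (?zI ! m - v)))) $$ (i,m)"
        using i m zIn[OF m] by (simp add: alpha_def R_def ac_simps)
    qed auto
    hence "det (mat b b (\<lambda>(k,m). alpha k (eI I m))) = (\<Prod>m<b. R m) * DeltaP c ?zI * Cb"
      using vdm_det[OF dI lzI, of R c] unfolding Cb_def by simp
    also have "(\<Prod>m<b. R m) = pairprod (gfun c) ?zI ?zII * pairprod (gfun c) ?zI tc"
    proof -
      have "(\<Prod>m<b. R m) = (\<Prod>m<b. \<Prod>j<length ?zII. gfun c (?zI ! m) (?zII ! j)) *
          (\<Prod>m<b. \<Prod>j<length tc. gfun c (?zI ! m) (tc ! j))"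
        unfolding R_def prod.distrib gfun_def
        using prod_nth_set[OF dII, of "\<lambda>v. c / (?zI ! _ - v)"] prod_nth_set[OF dist_tc, of "\<lambda>v. c / (?zI ! _ - v)"]
        by simp
      thus ?thesis unfolding pairprod_def lzI .
    qed
    finally show ?thesis by simp
  qed
  have Cbnz: "Cb \<noteq> 0" unfolding Cb_def using c by simp
  show ?thesis unfolding stepA stepB stepC by (simp add: ac_simps)
qed

end


lemma alg5:
  fixes Z Cb PH Dw Dt S C T P1 P2 H Sk s1 sb :: complex
  assumes "Cb \<noteq> 0" "Z * Cb = PH * Dw * Dt * S * (C * T)" "P1 * P2 * H = Sk * PH" "s1 * Sk * sb = S"
  shows "Z = s1 * P1 * P2 * (Dt * Dw * H * (sb * C * T) / Cb)"
proof -
  have "s1 * P1 * P2 * (Dt * Dw * H * (sb * C * T) / Cb) = s1 * (P1 * P2 * H) * sb * (Dt * Dw * C * T) / Cb"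
    by (simp add: ac_simps)
  also have "\<dots> = (s1 * Sk * sb) * PH * (Dt * Dw * C * T) / Cb" unfolding assms(3) by (simp add: ac_simps)
  also have "\<dots> = (Z * Cb) / Cb" unfolding assms(4) assms(2) by (simp add: ac_simps)
  also have "\<dots> = Z" using assms(1) by simp
  finally show ?thesis by simp
qed

context ZS begin

lemma K_sign: "pairprod (ffun c) w t * pairprod (hfun c) tc w = (-1) ^ (a * (a + b)) * pairprod (hfun c) w t"
proof -
  have "pairprod (hfun c) tc w = (\<Prod>l<a+b. \<Prod>m<a. hfun c (tc ! m) (w ! l))"
    unfolding pairprod_def ltc lw by (rule prod.swap)
  hence "pairprod (ffun c) w t * pairprod (hfun c) tc w =
     (\<Prod>l<a+b. \<Prod>m<a. ffun c (w ! l) (t ! m) * hfun c (tc ! m) (w ! l))"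
    unfolding pairprod_def lw lt by (simp add: prod.distrib)
  also have "\<dots> = (\<Prod>l<a+b. \<Prod>m<a. (-1) * hfun c (w ! l) (t ! m))"
  proof (intro prod.cong refl)
    fix l m assume l: "l \<in> {..<a+b}" and m: "m \<in> {..<a}"
    have p: "w ! l - t ! m \<noteq> 0" using w_ne_t l m by simp
    have tcm: "tc ! m = t ! m - c" using m lt by (simp add: tc_def)
    have e: "t ! m - c - w ! l + c = - (w ! l - t ! m)" by simp
    show "ffun c (w ! l) (t ! m) * hfun c (tc ! m) (w ! l) = (-1) * hfun c (w ! l) (t ! m)"
      unfolding tcm ffun_def hfun_def e using p c by (simp add: field_simps)
  qed
  also have "\<dots> = (\<Prod>l<a+b. (-1) ^ a * (\<Prod>m<a. hfun c (w ! l) (t ! m)))"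
    by (rule prod.cong[OF refl]) (simp only: prod.distrib prod_constant card_lessThan)
  also have "\<dots> = ((-1) ^ a) ^ (a + b) * pairprod (hfun c) w t"
    unfolding pairprod_def lw lt length_Cons list.size(3) by (simp only: prod.distrib prod_constant card_lessThan)
  finally show ?thesis by (simp add: power_mult)
qed

lemma main_loc:
  "Zhc c t x s y =
    (-1) ^ (a + b) * pairprod (ffun c) x t * pairprod (ffun c) s t *
    (\<Sum>I | I \<subseteq> {..<2 * b} \<and> card I = b.
       (let \<nu> = map (\<lambda>z. z - c) s @ y;
            \<nu>I = nths \<nu> I; \<nu>II = nths \<nu> ({..<2 * b} - I)
        in pairprod (gfun c) \<nu>I \<nu>II * IKdet c (\<nu>I @ map (\<lambda>z. z - c) t) (x @ s)))"
proof -
  have Cbnz: "Cb \<noteq> 0" unfolding Cb_def using c by simp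
  let ?D = "\<lambda>I. det (mat b b (\<lambda>(k,m). alpha k (eI I m))) *
     det (mat (b+a) (b+a) (\<lambda>(i,j). if i < b then Cr (eI I i) j else Arow (i-b) j))"
  have sumeq: "(\<Sum>I | I \<subseteq> {..<2 * b} \<and> card I = b.
       (let \<nu> = map (\<lambda>z. z - c) s @ y;
            \<nu>I = nths \<nu> I; \<nu>II = nths \<nu> ({..<2 * b} - I)
        in pairprod (gfun c) \<nu>I \<nu>II * IKdet c (\<nu>I @ map (\<lambda>z. z - c) t) (x @ s))) =
     (\<Sum>I | I \<subseteq> {..<2 * b} \<and> card I = b. DeltaP c t * Delta c w * pairprod (hfun c) tc w * ?D I / Cb)"
  proof (rule sum.cong[OF refl])
    fix I assume "I \<in> {I. I \<subseteq> {..<2 * b} \<and> card I = b}"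
    hence I: "I \<subseteq> {..<2 * b}" "card I = b" by auto
    have "pairprod (gfun c) (nths nu I) (nths nu ({..<2*b} - I)) * IKdet c (nths nu I @ tc) w =
        DeltaP c t * Delta c w * pairprod (hfun c) tc w * ?D I / Cb"
      using rhs_term[OF I] Cbnz by (simp add: field_simps)
    thus "(let \<nu> = map (\<lambda>z. z - c) s @ y;
            \<nu>I = nths \<nu> I; \<nu>II = nths \<nu> ({..<2 * b} - I)
        in pairprod (gfun c) \<nu>I \<nu>II * IKdet c (\<nu>I @ map (\<lambda>z. z - c) t) (x @ s)) =
        DeltaP c t * Delta c w * pairprod (hfun c) tc w * ?D I / Cb"
      unfolding Let_def nu_def tc_def w_def .
  qed
  have rhs: "(\<Sum>I | I \<subseteq> {..<2 * b} \<and> card I = b. DeltaP c t * Delta c w * pairprod (hfun c) tc w * ?D I / Cb) =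
      DeltaP c t * Delta c w * pairprod (hfun c) tc w * ((- (c ^ b)) ^ b * Theta) / Cb"
  proof -
    have "(\<Sum>I | I \<subseteq> {..<2 * b} \<and> card I = b. DeltaP c t * Delta c w * pairprod (hfun c) tc w * ?D I / Cb) =
      DeltaP c t * Delta c w * pairprod (hfun c) tc w * (\<Sum>I | I \<subseteq> {..<2 * b} \<and> card I = b. ?D I) / Cb"
      by (simp only: sum_distrib_left sum_divide_distrib)
    thus ?thesis unfolding rhs_detsum .
  qed
  have lhs: "Zhc c t x s y * Cb = pairprod (hfun c) w t * Delta c w * DeltaP c t * (-1) ^ (b * a) * (c ^ (b * b) * Theta)"
  proof -
    have "Zhc c t x s y * Cb = pairprod (hfun c) w t * Delta c w * DeltaP c t * (-1) ^ (b * a) *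
       (DeltaP c y * Cb * det (mat (b+a) (b+a) (\<lambda>(i,j). if i < b then Bcol i j else Arow (i-b) j)))"
      unfolding Zhc_swap by (simp add: ac_simps)
    thus ?thesis unfolding lhs_main .
  qed
  have pfw: "pairprod (ffun c) x t * pairprod (ffun c) s t = pairprod (ffun c) w t"
    unfolding w_def pairprod_append_left ..
  have sgn: "(-1::complex) ^ (a + b) * (-1) ^ (a * (a + b)) * (-1) ^ b = (-1) ^ (b * a)"
  proof -
    have "(-1::complex) ^ (a + b) * (-1) ^ (a * (a + b)) * (-1) ^ b = (-1) ^ (a + b + a * (a + b) + b)"
      by (simp add: power_add)
    also have "a + b + a * (a + b) + b = b * a + (a + a * a) + 2 * b" by (simp add: algebra_simps)
    also have "(-1::complex) ^ (b * a + (a + a * a) + 2 * b) = (-1) ^ (b * a)"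
    proof -
      have "even (a + a * a)" by simp
      hence "(-1::complex) ^ (a + a * a) = 1" by simp
      moreover have "(-1::complex) ^ (2 * b) = 1" by simp
      ultimately show ?thesis by (simp only: power_add) simp
    qed
    finally show ?thesis .
  qed
  have pw: "(- (c ^ b)) ^ b = (-1) ^ b * c ^ (b * b)"
  proof -
    have "- (c ^ b) = (-1) * c ^ b" by simp
    thus ?thesis by (simp only: power_mult_distrib power_mult)
  qed
  have K2: "pairprod (ffun c) x t * pairprod (ffun c) s t * pairprod (hfun c) tc w = (-1) ^ (a * (a + b)) * pairprod (hfun c) w t"
    unfolding pfw K_sign ..
  show ?thesis unfolding sumeq rhs pw
    by (rule alg5[OF Cbnz lhs K2 sgn])
qed

end

theorem mainTheorem8:
  fixes c :: complex and t x s y :: "complex list" and a b :: nat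
  assumes c: "c \<noteq> 0"
    and lens: "length t = a" "length x = a" "length s = b" "length y = b"
    and generic: "\<And>i j. i < length (t @ x @ s @ y) \<Longrightarrow> j < length (t @ x @ s @ y) \<Longrightarrow> i \<noteq> j \<Longrightarrow>
        (t @ x @ s @ y) ! i - (t @ x @ s @ y) ! j \<notin> {0, c, - c}"
  shows "Zhc c t x s y =
    (-1) ^ (a + b) * pairprod (ffun c) x t * pairprod (ffun c) s t *
    (\<Sum>I | I \<subseteq> {..<2 * b} \<and> card I = b.
       (let \<nu> = map (\<lambda>z. z - c) s @ y;
            \<nu>I = nths \<nu> I; \<nu>II = nths \<nu> ({..<2 * b} - I)
        in pairprod (gfun c) \<nu>I \<nu>II * IKdet c (\<nu>I @ map (\<lambda>z. z - c) t) (x @ s)))"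
proof -
  interpret ZS c t x s y a b by unfold_locales (use assms in auto)
  show ?thesis by (rule main_loc)
qed

end
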